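(* Let $\mathbf{I}$ be a $d$-system of ideals in a ring $R$ and $A:=\mathscr{A}(R,\mathbf{I})$. The chain of idempotent ideals $0=J_d\subset J_{d-1}\subset\cdots\subset J_1\subset J_0=A$ has the property that, for every $1\le i\le d$, the left $A/J_i$-module $J_{i-1}/J_i$ is projective, and there is a ring isomorphism $e_i(A/J_i)e_i\cong R/I_{i,i+1}$.
   Context: A $d$-system of ideals in $R$ is a collection $\{I_{ij}\mid1\le i,j\le d+1\}$ of two-sided ideals with $I_{ij}I_{jk}\subset I_{ik}$ and $I_{ij}=R$ for $i\ge j$. $\mathscr{A}(R,\mathbf{I}):=\bigoplus_{1\le i,j\le d}I_{ij}/I_{i,d+1}$ with multiplication $(x+I_{i,d+1})(y+I_{k,d+1})=\delta_{jk}(xy+I_{i,d+1})\in I_{il}/I_{i,d+1}$ for $x\in I_{ij},y\in I_{kl}$. Put $e_k:=1+I_{k,d+1}\in I_{kk}/I_{k,d+1}$ for $1\le k\le d$, $f_j:=\sum_{k>j}e_k$ for $0\le j\le d$ ($f_0=1$, $f_d=0$), and $J_j:=Af_jA$. *)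

theory Defs
  imports "HOL-Algebra.Algebra"
begin

definition d_system :: "('a, 'c) ring_scheme \<Rightarrow> nat \<Rightarrow> (nat \<Rightarrow> nat \<Rightarrow> 'a set) \<Rightarrow> bool" where
  "d_system R d I \<longleftrightarrow>
     (\<forall>i j. i \<in> {1..d+1} \<and> j \<in> {1..d+1} \<longrightarrow> ideal (I i j) R) \<and>
     (\<forall>i j k. i \<in> {1..d+1} \<and> j \<in> {1..d+1} \<and> k \<in> {1..d+1} \<longrightarrow>
         I i j \<cdot>\<^bsub>R\<^esub> I j k \<subseteq> I i k) \<and>
     (\<forall>i j. i \<in> {1..d+1} \<and> j \<in> {1..d+1} \<and> j \<le> i \<longrightarrow> I i j = carrier R)"

text \<open>Elements are d\<times>d matrices whose (i,j) entry lies in I_ij / I_{i,d+1}; the entries are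
  represented as additive cosets of I_{i,d+1}. Entries outside {1..d}\<times>{1..d} are {} .\<close>

definition A_carrier :: "('a, 'c) ring_scheme \<Rightarrow> nat \<Rightarrow> (nat \<Rightarrow> nat \<Rightarrow> 'a set)
    \<Rightarrow> (nat \<Rightarrow> nat \<Rightarrow> 'a set) set" where
  "A_carrier R d I = {a.
     (\<forall>i j. i \<in> {1..d} \<and> j \<in> {1..d} \<longrightarrow> (\<exists>x \<in> I i j. a i j = I i (d+1) +>\<^bsub>R\<^esub> x)) \<and>
     (\<forall>i j. \<not> (i \<in> {1..d} \<and> j \<in> {1..d}) \<longrightarrow> a i j = {})}"

definition A_zero :: "('a, 'c) ring_scheme \<Rightarrow> nat \<Rightarrow> (nat \<Rightarrow> nat \<Rightarrow> 'a set)
    \<Rightarrow> nat \<Rightarrow> nat \<Rightarrow> 'a set" where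
  "A_zero R d I = (\<lambda>i j. if i \<in> {1..d} \<and> j \<in> {1..d} then I i (d+1) else {})"

definition A_one :: "('a, 'c) ring_scheme \<Rightarrow> nat \<Rightarrow> (nat \<Rightarrow> nat \<Rightarrow> 'a set)
    \<Rightarrow> nat \<Rightarrow> nat \<Rightarrow> 'a set" where
  "A_one R d I = (\<lambda>i j. if i \<in> {1..d} \<and> j \<in> {1..d}
       then (if i = j then I i (d+1) +>\<^bsub>R\<^esub> \<one>\<^bsub>R\<^esub> else I i (d+1)) else {})"

definition A_add :: "('a, 'c) ring_scheme \<Rightarrow> (nat \<Rightarrow> nat \<Rightarrow> 'a set) \<Rightarrow> (nat \<Rightarrow> nat \<Rightarrow> 'a set)
    \<Rightarrow> nat \<Rightarrow> nat \<Rightarrow> 'a set" where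
  "A_add R a b = (\<lambda>i j. a i j <+>\<^bsub>R\<^esub> b i j)"

text \<open>Matrix multiplication: (ab)_il = sum_j x_ij y_jl + I_{i,d+1}, for representatives
  x_ij of a_ij and y_jl of b_jl (independent of the choice of representatives).\<close>
definition A_mult :: "('a, 'c) ring_scheme \<Rightarrow> nat \<Rightarrow> (nat \<Rightarrow> nat \<Rightarrow> 'a set)
    \<Rightarrow> (nat \<Rightarrow> nat \<Rightarrow> 'a set) \<Rightarrow> (nat \<Rightarrow> nat \<Rightarrow> 'a set) \<Rightarrow> nat \<Rightarrow> nat \<Rightarrow> 'a set" where
  "A_mult R d I a b = (\<lambda>i l. if i \<in> {1..d} \<and> l \<in> {1..d} then
       \<Union> { I i (d+1) +>\<^bsub>R\<^esub> (\<Oplus>\<^bsub>R\<^esub>j\<in>{1..d}. x j \<otimes>\<^bsub>R\<^esub> y j) | x y.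
             \<forall>j \<in> {1..d}. x j \<in> a i j \<and> y j \<in> b j l }
     else {})"

definition A_ring :: "('a, 'c) ring_scheme \<Rightarrow> nat \<Rightarrow> (nat \<Rightarrow> nat \<Rightarrow> 'a set)
    \<Rightarrow> (nat \<Rightarrow> nat \<Rightarrow> 'a set) ring" where
  "A_ring R d I = \<lparr> partial_object.carrier = A_carrier R d I, monoid.mult = A_mult R d I,
      monoid.one = A_one R d I, ring.zero = A_zero R d I, ring.add = A_add R \<rparr>"

definition A_e :: "('a, 'c) ring_scheme \<Rightarrow> nat \<Rightarrow> (nat \<Rightarrow> nat \<Rightarrow> 'a set)
    \<Rightarrow> nat \<Rightarrow> nat \<Rightarrow> nat \<Rightarrow> 'a set" where
  "A_e R d I k = (\<lambda>i j. if i = k \<and> j = k \<and> k \<in> {1..d} then I k (d+1) +>\<^bsub>R\<^esub> \<one>\<^bsub>R\<^esub>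
                        else A_zero R d I i j)"

definition A_f :: "('a, 'c) ring_scheme \<Rightarrow> nat \<Rightarrow> (nat \<Rightarrow> nat \<Rightarrow> 'a set)
    \<Rightarrow> nat \<Rightarrow> nat \<Rightarrow> nat \<Rightarrow> 'a set" where
  "A_f R d I j = (\<Oplus>\<^bsub>A_ring R d I\<^esub>k\<in>{j<..d}. A_e R d I k)"

definition A_J :: "('a, 'c) ring_scheme \<Rightarrow> nat \<Rightarrow> (nat \<Rightarrow> nat \<Rightarrow> 'a set)
    \<Rightarrow> nat \<Rightarrow> (nat \<Rightarrow> nat \<Rightarrow> 'a set) set" where
  "A_J R d I j = genideal (A_ring R d I) {A_f R d I j}"

definition left_module :: "('s, 'c) ring_scheme \<Rightarrow> ('s, 'm, 'e) module_scheme \<Rightarrow> bool" where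
  "left_module S M \<longleftrightarrow> ring S \<and> abelian_group M \<and>
     (\<forall>a \<in> carrier S. \<forall>x \<in> carrier M. a \<odot>\<^bsub>M\<^esub> x \<in> carrier M) \<and>
     (\<forall>a \<in> carrier S. \<forall>b \<in> carrier S. \<forall>x \<in> carrier M.
         (a \<oplus>\<^bsub>S\<^esub> b) \<odot>\<^bsub>M\<^esub> x = a \<odot>\<^bsub>M\<^esub> x \<oplus>\<^bsub>M\<^esub> b \<odot>\<^bsub>M\<^esub> x) \<and>
     (\<forall>a \<in> carrier S. \<forall>x \<in> carrier M. \<forall>y \<in> carrier M.
         a \<odot>\<^bsub>M\<^esub> (x \<oplus>\<^bsub>M\<^esub> y) = a \<odot>\<^bsub>M\<^esub> x \<oplus>\<^bsub>M\<^esub> a \<odot>\<^bsub>M\<^esub> y) \<and>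
     (\<forall>a \<in> carrier S. \<forall>b \<in> carrier S. \<forall>x \<in> carrier M.
         (a \<otimes>\<^bsub>S\<^esub> b) \<odot>\<^bsub>M\<^esub> x = a \<odot>\<^bsub>M\<^esub> (b \<odot>\<^bsub>M\<^esub> x)) \<and>
     (\<forall>x \<in> carrier M. \<one>\<^bsub>S\<^esub> \<odot>\<^bsub>M\<^esub> x = x)"

definition lmod_hom :: "('s, 'c) ring_scheme \<Rightarrow> ('s, 'm, 'e) module_scheme
    \<Rightarrow> ('s, 'n, 'f) module_scheme \<Rightarrow> ('m \<Rightarrow> 'n) set" where
  "lmod_hom S M N = {h. h \<in> carrier M \<rightarrow> carrier N \<and>
     (\<forall>x \<in> carrier M. \<forall>y \<in> carrier M. h (x \<oplus>\<^bsub>M\<^esub> y) = h x \<oplus>\<^bsub>N\<^esub> h y) \<and>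
     (\<forall>a \<in> carrier S. \<forall>x \<in> carrier M. h (a \<odot>\<^bsub>M\<^esub> x) = a \<odot>\<^bsub>N\<^esub> h x)}"

text \<open>Projectivity via the lifting property, tested against all left S-modules whose
  carrier type is 'b. (In the main theorem 'b is a free type variable, i.e. arbitrary.)\<close>
definition projective_lmod :: "'b itself \<Rightarrow> ('s, 'c) ring_scheme \<Rightarrow> ('s, 'm, 'e) module_scheme \<Rightarrow> bool" where
  "projective_lmod (TYPE('b)) S P \<longleftrightarrow> left_module S P \<and>
     (\<forall>(M :: ('s, 'b) module) (N :: ('s, 'b) module) g f.
        left_module S M \<and> left_module S N \<and> g \<in> lmod_hom S M N \<and> g ` carrier M = carrier N \<and>
        f \<in> lmod_hom S P N \<longrightarrow>
        (\<exists>h \<in> lmod_hom S P M. \<forall>p \<in> carrier P. g (h p) = f p))"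

definition quot_submodule :: "('a, 'c) ring_scheme \<Rightarrow> 'a set \<Rightarrow> 'a set \<Rightarrow> ('a set, 'a set) module" where
  "quot_submodule A K J = \<lparr> partial_object.carrier = {J +>\<^bsub>A\<^esub> x | x. x \<in> K},
      monoid.mult = rcoset_mult A J, monoid.one = J +>\<^bsub>A\<^esub> \<one>\<^bsub>A\<^esub>, ring.zero = J, ring.add = set_add A,
      smult = rcoset_mult A J \<rparr>"

definition corner_ring :: "('a, 'c) ring_scheme \<Rightarrow> 'a \<Rightarrow> 'a ring" where
  "corner_ring S e = \<lparr> partial_object.carrier = {e \<otimes>\<^bsub>S\<^esub> x \<otimes>\<^bsub>S\<^esub> e | x. x \<in> carrier S},
      monoid.mult = monoid.mult S, monoid.one = e, ring.zero = \<zero>\<^bsub>S\<^esub>, ring.add = ring.add S \<rparr>"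

end

theory Submission
  imports Defs
begin

lemma (in ring) coset_eq_iff:
  assumes "ideal N R" "x \<in> carrier R" "y \<in> carrier R"
  shows "(N +> x = N +> y) \<longleftrightarrow> x \<ominus> y \<in> N"
proof -
  interpret N: ideal N R by fact
  show ?thesis
  proof
    assume "N +> x = N +> y"
    then have "x \<in> N +> y" using N.a_rcos_self assms by blast
    then show "x \<ominus> y \<in> N" using N.a_rcos_module_minus[OF ring_axioms] assms by blast
  next
    assume "x \<ominus> y \<in> N"
    then have "x \<in> N +> y" using N.a_rcos_module_minus[OF ring_axioms] assms by blast
    then show "N +> x = N +> y" using N.a_repr_independence' assms by metis
  qed
qed

lemma (in ring) rcos_mem_iff:
  assumes "ideal N R" "x \<in> carrier R" "y \<in> carrier R"
  shows "x \<in> N +> y \<longleftrightarrow> x \<ominus> y \<in> N"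
proof -
  interpret N: ideal N R by fact
  show ?thesis using N.a_rcos_module_minus[OF ring_axioms] assms by blast
qed

lemma (in ring) finsum_ideal:
  assumes "ideal N R" "finite S" "\<And>j. j \<in> S \<Longrightarrow> f j \<in> N"
  shows "finsum R f S \<in> N"
  using assms(2,3)
proof (induction S rule: finite_induct)
  case empty
  then show ?case using assms(1) by (simp add: additive_subgroup.zero_closed ideal.axioms(1))
next
  case (insert x F)
  have c: "f \<in> F \<rightarrow> carrier R" "f x \<in> carrier R"
    using insert.prems ideal.Icarr[OF assms(1)] by auto
  show ?case using insert c
    by (simp add: additive_subgroup.a_closed[OF ideal.axioms(1)[OF assms(1)]])
qed

lemma (in ring) finsum_swap:
  assumes "finite A" "finite B" "\<And>a b. a \<in> A \<Longrightarrow> b \<in> B \<Longrightarrow> f a b \<in> carrier R"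
  shows "(\<Oplus>a\<in>A. \<Oplus>b\<in>B. f a b) = (\<Oplus>b\<in>B. \<Oplus>a\<in>A. f a b)"
  using assms(1,3)
proof (induction A rule: finite_induct)
  case empty
  then show ?case by (simp add: finsum_zero)
next
  case (insert x F)
  have "(\<Oplus>a\<in>insert x F. \<Oplus>b\<in>B. f a b) = (\<Oplus>b\<in>B. f x b) \<oplus> (\<Oplus>a\<in>F. \<Oplus>b\<in>B. f a b)"
    using insert by (intro finsum_insert) (auto intro!: finsum_closed)
  also have "\<dots> = (\<Oplus>b\<in>B. f x b) \<oplus> (\<Oplus>b\<in>B. \<Oplus>a\<in>F. f a b)"
    using insert by simp
  also have "\<dots> = (\<Oplus>b\<in>B. f x b \<oplus> (\<Oplus>a\<in>F. f a b))"
    using insert by (intro finsum_addf[symmetric]) (auto intro!: finsum_closed)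
  also have "\<dots> = (\<Oplus>b\<in>B. \<Oplus>a\<in>insert x F. f a b)"
    using insert by (intro finsum_cong') (auto intro!: finsum_closed simp: finsum_insert)
  finally show ?case .
qed

lemma (in ring) minus4:
  assumes "a \<in> carrier R" "b \<in> carrier R" "c \<in> carrier R" "e \<in> carrier R"
  shows "a \<oplus> b \<ominus> (c \<oplus> e) = (a \<ominus> c) \<oplus> (b \<ominus> e)"
  using assms by algebra

lemma (in ring) rcos_finsum:
  assumes "ideal N R" "finite S" "\<And>j. j \<in> S \<Longrightarrow> f j \<in> N +> g j"
    "\<And>j. j \<in> S \<Longrightarrow> g j \<in> carrier R"  "\<And>j. j \<in> S \<Longrightarrow> f j \<in> carrier R"
  shows "finsum R f S \<in> N +> finsum R g S"
  using assms(2-)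
proof (induction S rule: finite_induct)
  case empty
  then show ?case using assms(1)
    by (simp add: additive_subgroup.zero_closed ideal.axioms(1) rcos_mem_iff r_neg minus_eq)
next
  case (insert x F)
  have c: "f \<in> F \<rightarrow> carrier R" "g \<in> F \<rightarrow> carrier R" using insert by auto
  have "f x \<oplus> finsum R f F \<ominus> (g x \<oplus> finsum R g F) = (f x \<ominus> g x) \<oplus> (finsum R f F \<ominus> finsum R g F)"
    using insert c by (intro minus4) (auto simp: finsum_closed)
  moreover have "f x \<ominus> g x \<in> N" "finsum R f F \<ominus> finsum R g F \<in> N"
    using insert c rcos_mem_iff[OF assms(1)] by (auto simp: finsum_closed)
  ultimately have "f x \<oplus> finsum R f F \<ominus> (g x \<oplus> finsum R g F) \<in> N"
    by (simp add: additive_subgroup.a_closed[OF ideal.axioms(1)[OF assms(1)]])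
  then show ?case using insert c rcos_mem_iff[OF assms(1)] by (simp add: finsum_closed)
qed


locale dsys = ring R for R :: "'a ring" (structure) +
  fixes d :: nat and I :: "nat \<Rightarrow> nat \<Rightarrow> 'a set"
  assumes dsys: "d_system R d I"
begin

lemma idl: assumes "i \<in> {1..d+1}" "j \<in> {1..d+1}" shows "ideal (I i j) R"
  using conjunct1[OF dsys[unfolded d_system_def], rule_format, OF conjI[OF assms]] .

lemma full: assumes "i \<in> {1..d+1}" "j \<in> {1..d+1}" "j \<le> i" shows "I i j = carrier R"
  using conjunct2[OF conjunct2[OF dsys[unfolded d_system_def]], rule_format, OF conjI[OF assms(1) conjI[OF assms(2,3)]]] .

lemma prodI: assumes "i \<in> {1..d+1}" "j \<in> {1..d+1}" "k \<in> {1..d+1}" "x \<in> I i j" "y \<in> I j k"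
  shows "x \<otimes> y \<in> I i k"
proof -
  have "I i j \<cdot> I j k \<subseteq> I i k"
    using conjunct1[OF conjunct2[OF dsys[unfolded d_system_def]], rule_format, OF conjI[OF assms(1) conjI[OF assms(2,3)]]] .
  moreover have "x \<otimes> y \<in> I i j \<cdot> I j k" using assms(4,5) by (rule ideal_prod.prod)
  ultimately show ?thesis by blast
qed

lemma Icarr: "i \<in> {1..d+1} \<Longrightarrow> j \<in> {1..d+1} \<Longrightarrow> x \<in> I i j \<Longrightarrow> x \<in> carrier R"
  by (rule ideal.Icarr[OF idl])

lemma Izero: "i \<in> {1..d+1} \<Longrightarrow> j \<in> {1..d+1} \<Longrightarrow> \<zero> \<in> I i j"
  by (rule additive_subgroup.zero_closed[OF ideal.axioms(1)[OF idl]])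

lemma Iadd: "i \<in> {1..d+1} \<Longrightarrow> j \<in> {1..d+1} \<Longrightarrow> x \<in> I i j \<Longrightarrow> y \<in> I i j \<Longrightarrow> x \<oplus> y \<in> I i j"
  by (rule additive_subgroup.a_closed[OF ideal.axioms(1)[OF idl]])

lemma Ineg: "i \<in> {1..d+1} \<Longrightarrow> j \<in> {1..d+1} \<Longrightarrow> x \<in> I i j \<Longrightarrow> \<ominus> x \<in> I i j"
  by (rule additive_subgroup.a_inv_closed[OF ideal.axioms(1)[OF idl]])

lemma Iminus: "i \<in> {1..d+1} \<Longrightarrow> j \<in> {1..d+1} \<Longrightarrow> x \<in> I i j \<Longrightarrow> y \<in> I i j \<Longrightarrow> x \<ominus> y \<in> I i j"
  using Iadd Ineg by (simp add: minus_eq)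

lemma Ilmul: "i \<in> {1..d+1} \<Longrightarrow> j \<in> {1..d+1} \<Longrightarrow> x \<in> I i j \<Longrightarrow> y \<in> carrier R \<Longrightarrow> y \<otimes> x \<in> I i j"
  by (rule ideal.I_l_closed[OF idl])

lemma Irmul: "i \<in> {1..d+1} \<Longrightarrow> j \<in> {1..d+1} \<Longrightarrow> x \<in> I i j \<Longrightarrow> y \<in> carrier R \<Longrightarrow> x \<otimes> y \<in> I i j"
  by (rule ideal.I_r_closed[OF idl])

lemma sub: assumes "i \<in> {1..d+1}" "k \<in> {1..d+1}" "1 \<le> j" "j \<le> k"
  shows "I i k \<subseteq> I i j"
proof
  fix x assume x: "x \<in> I i k"
  have j: "j \<in> {1..d+1}" using assms by auto
  have "\<one> \<in> I k j" using full[OF assms(2) j] assms by auto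
  then have "x \<otimes> \<one> \<in> I i j" using prodI[OF assms(1,2) j x] by blast
  then show "x \<in> I i j" using Icarr[OF assms(1,2) x] by simp
qed

lemma subN: "i \<in> {1..d+1} \<Longrightarrow> j \<in> {1..d+1} \<Longrightarrow> I i (d+1) \<subseteq> I i j"
  by (rule sub) auto

definition cm :: "(nat \<Rightarrow> nat \<Rightarrow> 'a) \<Rightarrow> bool" where "cm U \<longleftrightarrow> (\<forall>i j. U i j \<in> carrier R)"
definition vm :: "(nat \<Rightarrow> nat \<Rightarrow> 'a) \<Rightarrow> bool" where
  "vm U \<longleftrightarrow> cm U \<and> (\<forall>i\<in>{1..d}. \<forall>j\<in>{1..d}. U i j \<in> I i j)"
definition mm :: "(nat \<Rightarrow> nat \<Rightarrow> 'a) \<Rightarrow> (nat \<Rightarrow> nat \<Rightarrow> 'a) \<Rightarrow> (nat \<Rightarrow> nat \<Rightarrow> 'a)" where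
  "mm U V = (\<lambda>i l. \<Oplus>j\<in>{1..d}. U i j \<otimes> V j l)"
definition mk :: "(nat \<Rightarrow> nat \<Rightarrow> 'a) \<Rightarrow> nat \<Rightarrow> nat \<Rightarrow> 'a set" where
  "mk U = (\<lambda>i j. if i \<in> {1..d} \<and> j \<in> {1..d} then I i (d+1) +> U i j else {})"
definition madd :: "(nat \<Rightarrow> nat \<Rightarrow> 'a) \<Rightarrow> (nat \<Rightarrow> nat \<Rightarrow> 'a) \<Rightarrow> (nat \<Rightarrow> nat \<Rightarrow> 'a)" where
  "madd U V = (\<lambda>i j. U i j \<oplus> V i j)"
definition mneg :: "(nat \<Rightarrow> nat \<Rightarrow> 'a) \<Rightarrow> (nat \<Rightarrow> nat \<Rightarrow> 'a)" where
  "mneg U = (\<lambda>i j. \<ominus> U i j)"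
definition mz :: "nat \<Rightarrow> nat \<Rightarrow> 'a" where "mz = (\<lambda>i j. \<zero>)"
definition mone :: "nat \<Rightarrow> nat \<Rightarrow> 'a" where "mone = (\<lambda>i j. if i = j then \<one> else \<zero>)"

lemma cmD: "cm U \<Longrightarrow> U i j \<in> carrier R" by (simp add: cm_def)
lemma vm_cm: "vm U \<Longrightarrow> cm U" by (simp add: vm_def)
lemma vmD: "vm U \<Longrightarrow> U i j \<in> carrier R" by (simp add: vm_def cm_def)
lemma vmI: "vm U \<Longrightarrow> i \<in> {1..d} \<Longrightarrow> j \<in> {1..d} \<Longrightarrow> U i j \<in> I i j" by (simp add: vm_def)

lemma cm_mm: "cm U \<Longrightarrow> cm V \<Longrightarrow> cm (mm U V)"
  unfolding cm_def mm_def by (auto intro!: finsum_closed)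

lemma cm_madd: "cm U \<Longrightarrow> cm V \<Longrightarrow> cm (madd U V)"
  unfolding cm_def madd_def by auto
lemma cm_mneg: "cm U \<Longrightarrow> cm (mneg U)"
  unfolding cm_def mneg_def by auto
lemma cm_mz: "cm mz" unfolding cm_def mz_def by auto
lemma cm_mone: "cm mone" unfolding cm_def mone_def by auto

lemma vm_mm: assumes "vm U" "vm V" shows "vm (mm U V)"
proof -
  have "(mm U V) i l \<in> I i l" if "i \<in> {1..d}" "l \<in> {1..d}" for i l
    unfolding mm_def
  proof (rule finsum_ideal[OF idl])
    fix j assume j: "j \<in> {1..d}"
    show "U i j \<otimes> V j l \<in> I i l"
      using prodI[of i j l "U i j" "V j l"] vmI[OF assms(1) that(1) j] vmI[OF assms(2) j that(2)] that j
      by auto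
  qed (use that in auto)
  then show ?thesis using assms cm_mm vm_cm unfolding vm_def by blast
qed

lemma vm_madd: "vm U \<Longrightarrow> vm V \<Longrightarrow> vm (madd U V)"
  unfolding vm_def using cm_madd by (auto simp: madd_def intro!: Iadd)
lemma vm_mneg: "vm U \<Longrightarrow> vm (mneg U)"
  unfolding vm_def using cm_mneg by (auto simp: mneg_def intro!: Ineg)
lemma vm_mz: "vm mz"
  unfolding vm_def using cm_mz by (auto simp: mz_def intro!: Izero)
lemma vm_mone: "vm mone"
  unfolding vm_def using cm_mone by (auto simp: mone_def full intro!: Izero)

lemma mm_assoc: assumes "cm U" "cm V" "cm W" shows "mm (mm U V) W = mm U (mm V W)"
proof (intro ext)
  fix i l
  have c: "\<And>i j. U i j \<in> carrier R" "\<And>i j. V i j \<in> carrier R" "\<And>i j. W i j \<in> carrier R"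
    using assms cmD by auto
  have "mm (mm U V) W i l = (\<Oplus>k\<in>{1..d}. \<Oplus>j\<in>{1..d}. U i j \<otimes> V j k \<otimes> W k l)"
    unfolding mm_def using c by (intro finsum_cong') (auto simp: finsum_ldistr)
  also have "\<dots> = (\<Oplus>j\<in>{1..d}. \<Oplus>k\<in>{1..d}. U i j \<otimes> V j k \<otimes> W k l)"
    using c by (intro finsum_swap) auto
  also have "\<dots> = mm U (mm V W) i l"
    unfolding mm_def using c by (intro finsum_cong') (auto simp: finsum_rdistr m_assoc)
  finally show "mm (mm U V) W i l = mm U (mm V W) i l" .
qed

lemma mm_ldistr: assumes "cm U" "cm V" "cm W" shows "mm (madd U V) W = madd (mm U W) (mm V W)"
  using assms unfolding mm_def madd_def cm_def
  by (intro ext) (simp add: l_distr finsum_addf)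

lemma mm_rdistr: assumes "cm U" "cm V" "cm W" shows "mm W (madd U V) = madd (mm W U) (mm W V)"
  using assms unfolding mm_def madd_def cm_def
  by (intro ext) (simp add: r_distr finsum_addf)

lemma mm_mone_l: assumes "cm U" "i \<in> {1..d}" shows "mm mone U i l = U i l"
proof -
  have "mm mone U i l = (\<Oplus>j\<in>{1..d}. if i = j then U j l else \<zero>)"
    unfolding mm_def mone_def using assms cmD by (intro finsum_cong') auto
  also have "\<dots> = U i l" using assms cmD by (intro finsum_singleton) auto
  finally show ?thesis .
qed

lemma mm_mone_r: assumes "cm U" "l \<in> {1..d}" shows "mm U mone i l = U i l"
proof -
  have "mm U mone i l = (\<Oplus>j\<in>{1..d}. if l = j then U i j else \<zero>)"
    unfolding mm_def mone_def using assms cmD by (intro finsum_cong') auto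
  also have "\<dots> = U i l" using assms cmD by (intro finsum_singleton) auto
  finally show ?thesis .
qed

abbreviation AA where "AA \<equiv> A_ring R d I"

lemma AA_simps:
  "carrier AA = A_carrier R d I" "monoid.mult AA = A_mult R d I" "monoid.one AA = A_one R d I"
  "ring.zero AA = A_zero R d I" "ring.add AA = A_add R"
  by (simp_all add: A_ring_def)

lemma mk_cong: "(\<And>i j. i \<in> {1..d} \<Longrightarrow> j \<in> {1..d} \<Longrightarrow> U i j = V i j) \<Longrightarrow> mk U = mk V"
  unfolding mk_def by (intro ext) simp

lemma mk_eq_iff: assumes "cm U" "cm V"
  shows "mk U = mk V \<longleftrightarrow> (\<forall>i\<in>{1..d}. \<forall>j\<in>{1..d}. U i j \<ominus> V i j \<in> I i (d+1))"
proof
  assume h: "mk U = mk V"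
  show "\<forall>i\<in>{1..d}. \<forall>j\<in>{1..d}. U i j \<ominus> V i j \<in> I i (d+1)"
  proof (intro ballI)
    fix i j assume ij: "i \<in> {1..d}" "j \<in> {1..d}"
    have "I i (d+1) +> U i j = I i (d+1) +> V i j"
      using fun_cong[OF fun_cong[OF h, of i], of j] ij unfolding mk_def by simp
    then show "U i j \<ominus> V i j \<in> I i (d+1)"
      using coset_eq_iff[OF idl] ij assms cmD by auto
  qed
next
  assume h: "\<forall>i\<in>{1..d}. \<forall>j\<in>{1..d}. U i j \<ominus> V i j \<in> I i (d+1)"
  show "mk U = mk V"
    unfolding mk_def using h coset_eq_iff[OF idl] assms cmD by (intro ext) auto
qed

lemma carrier_mk: "A_carrier R d I = mk ` {U. vm U}"
proof
  show "mk ` {U. vm U} \<subseteq> A_carrier R d I"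
    unfolding A_carrier_def mk_def using vmI by auto
next
  show "A_carrier R d I \<subseteq> mk ` {U. vm U}"
  proof
    fix a assume a: "a \<in> A_carrier R d I"
    define U where "U = (\<lambda>i j. if i \<in> {1..d} \<and> j \<in> {1..d}
       then SOME x. x \<in> I i j \<and> a i j = I i (d+1) +> x else \<zero>)"
    have U: "U i j \<in> I i j \<and> a i j = I i (d+1) +> U i j" if "i \<in> {1..d}" "j \<in> {1..d}" for i j
    proof -
      have E: "\<exists>x. x \<in> I i j \<and> a i j = I i (d+1) +> x" using a that unfolding A_carrier_def by blast
      have "(SOME x. x \<in> I i j \<and> a i j = I i (d+1) +> x) \<in> I i j \<and>
            a i j = I i (d+1) +> (SOME x. x \<in> I i j \<and> a i j = I i (d+1) +> x)"
        by (rule someI_ex[OF E])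
      moreover have "U i j = (SOME x. x \<in> I i j \<and> a i j = I i (d+1) +> x)" unfolding U_def using that by simp
      ultimately show ?thesis by simp
    qed
    have "vm U" unfolding vm_def cm_def
    proof (intro conjI allI ballI)
      fix i j show "U i j \<in> carrier R"
        using U Icarr[of i j] by (cases "i \<in> {1..d} \<and> j \<in> {1..d}") (auto simp: U_def)
    qed (use U in auto)
    moreover have "a = mk U"
      unfolding mk_def using U a unfolding A_carrier_def by (intro ext) auto
    ultimately show "a \<in> mk ` {U. vm U}" by blast
  qed
qed

lemma mk_in: "vm U \<Longrightarrow> mk U \<in> carrier AA"
  using carrier_mk AA_simps by auto

lemma carrierE: assumes "a \<in> carrier AA" obtains U where "vm U" "a = mk U"
  using assms carrier_mk AA_simps by auto

lemma set_add_empty: "{} <+>\<^bsub>R\<^esub> {} = {}"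
  by (simp add: set_add_def set_mult_def)

lemma add_mk: assumes "cm U" "cm V" shows "A_add R (mk U) (mk V) = mk (madd U V)"
  unfolding A_add_def mk_def madd_def
  using assms cmD ideal.a_rcos_sum[OF idl] set_add_empty by (intro ext) auto

lemma zero_mk: "A_zero R d I = mk mz"
  unfolding A_zero_def mk_def mz_def using a_rcos_zero[OF idl Izero] by (intro ext) auto

lemma one_mk: "A_one R d I = mk mone"
  unfolding A_one_def mk_def mone_def using a_rcos_zero[OF idl Izero] by (intro ext) auto

lemma mult_entry:
  assumes U: "vm U" and V: "vm V" and il: "i \<in> {1..d}" "l \<in> {1..d}"
    and xy: "\<forall>j\<in>{1..d}. x j \<in> mk U i j \<and> y j \<in> mk V j l"
  shows "(\<Oplus>j\<in>{1..d}. x j \<otimes> y j) \<in> I i (d+1) +> mm U V i l"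
  unfolding mm_def
proof (rule rcos_finsum[OF idl])
  fix j assume j: "j \<in> {1..d}"
  have i1: "i \<in> {1..d+1}" "d+1 \<in> {1..d+1}" "j \<in> {1..d+1}" "l \<in> {1..d+1}" using il j by auto
  have xj: "x j \<in> I i (d+1) +> U i j" and yj: "y j \<in> I j (d+1) +> V j l"
    using xy j il unfolding mk_def by auto
  have cx: "x j \<in> carrier R" using xj ideal.Icarr[OF idl] i1 U vmD
    by (metis a_r_coset_subset_G subsetD idl ideal.axioms(1) additive_subgroup.a_subset)
  have cy: "y j \<in> carrier R" using yj ideal.Icarr[OF idl] i1 V vmD
    by (metis a_r_coset_subset_G subsetD idl ideal.axioms(1) additive_subgroup.a_subset)
  have h: "x j \<ominus> U i j \<in> I i (d+1)" using xj rcos_mem_iff[OF idl] i1 cx U vmD by blast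
  have k: "y j \<ominus> V j l \<in> I j (d+1)" using yj rcos_mem_iff[OF idl] i1 cy V vmD by blast
  have e: "x j \<otimes> y j \<ominus> U i j \<otimes> V j l = (x j \<ominus> U i j) \<otimes> y j \<oplus> U i j \<otimes> (y j \<ominus> V j l)"
    using cx cy U V vmD[of U] vmD[of V] by algebra
  have "(x j \<ominus> U i j) \<otimes> y j \<in> I i (d+1)" using Irmul[OF i1(1,2) h cy] .
  moreover have "U i j \<otimes> (y j \<ominus> V j l) \<in> I i (d+1)"
    using prodI[OF i1(1,3,2) vmI[OF U il(1) j] k] .
  ultimately have "x j \<otimes> y j \<ominus> U i j \<otimes> V j l \<in> I i (d+1)" using e Iadd i1 by simp
  then show "x j \<otimes> y j \<in> I i (d+1) +> U i j \<otimes> V j l"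
    using rcos_mem_iff[OF idl] i1 cx cy U V vmD by auto
  show "x j \<otimes> y j \<in> carrier R" using cx cy by simp
  show "U i j \<otimes> V j l \<in> carrier R" using U V vmD by simp
qed (use il in auto)

lemma mult_mk: assumes U: "vm U" and V: "vm V" shows "A_mult R d I (mk U) (mk V) = mk (mm U V)"
proof (intro ext)
  fix i l
  show "A_mult R d I (mk U) (mk V) i l = mk (mm U V) i l"
  proof (cases "i \<in> {1..d} \<and> l \<in> {1..d}")
    case False then show ?thesis unfolding A_mult_def mk_def by auto
  next
    case True
    have i1: "i \<in> {1..d+1}" "d+1 \<in> {1..d+1}" using True by auto
    have cmm: "mm U V i l \<in> carrier R" using cm_mm U V vm_cm cmD by blast
    have eq: "I i (d+1) +> (\<Oplus>j\<in>{1..d}. x j \<otimes> y j) = I i (d+1) +> mm U V i l"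
      if "\<forall>j\<in>{1..d}. x j \<in> mk U i j \<and> y j \<in> mk V j l" for x y
    proof -
      have m: "(\<Oplus>j\<in>{1..d}. x j \<otimes> y j) \<in> I i (d+1) +> mm U V i l"
        using mult_entry[OF U V _ _ that] True by blast
      then show ?thesis using ideal.axioms(1)[OF idl[OF i1]] i1 cmm
        by (metis abelian_subgroupI3 ideal.axioms(1) idl is_abelian_group abelian_subgroup.a_repr_independence')
    qed
    have ex: "\<forall>j\<in>{1..d}. U i j \<in> mk U i j \<and> V j l \<in> mk V j l"
      using True U V vmD unfolding mk_def
      by (auto intro!: abelian_subgroup.a_rcos_self abelian_subgroupI3 ideal.axioms(1) idl is_abelian_group)
    have S: "{I i (d+1) +> (\<Oplus>j\<in>{1..d}. x j \<otimes> y j) | x y. \<forall>j\<in>{1..d}. x j \<in> mk U i j \<and> y j \<in> mk V j l}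
       = {I i (d+1) +> mm U V i l}"
    proof
      show "{I i (d+1) +> (\<Oplus>j\<in>{1..d}. x j \<otimes> y j) | x y. \<forall>j\<in>{1..d}. x j \<in> mk U i j \<and> y j \<in> mk V j l} \<subseteq> {I i (d+1) +> mm U V i l}" using eq by auto
    next
      show "{I i (d+1) +> mm U V i l} \<subseteq> {I i (d+1) +> (\<Oplus>j\<in>{1..d}. x j \<otimes> y j) | x y. \<forall>j\<in>{1..d}. x j \<in> mk U i j \<and> y j \<in> mk V j l}"
      proof
      fix z assume "z \<in> {I i (d+1) +> mm U V i l}"
      then have "z = I i (d+1) +> (\<Oplus>j\<in>{1..d}. U i j \<otimes> V j l)"
        using eq[of "\<lambda>j. U i j" "\<lambda>j. V j l"] ex by simp
      then show "z \<in> {I i (d+1) +> (\<Oplus>j\<in>{1..d}. x j \<otimes> y j) | x y. \<forall>j\<in>{1..d}. x j \<in> mk U i j \<and> y j \<in> mk V j l}"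
        apply (simp only: mem_Collect_eq)
        apply (rule exI[of _ "\<lambda>j. U i j"], rule exI[of _ "\<lambda>j. V j l"])
        using ex by simp
    qed
    qed
    show ?thesis
      unfolding A_mult_def using True S by (simp add: mk_def)
  qed
qed

end

context dsys
begin

lemma AA_add: "vm U \<Longrightarrow> vm V \<Longrightarrow> mk U \<oplus>\<^bsub>AA\<^esub> mk V = mk (madd U V)"
  by (simp add: AA_simps add_mk vm_cm)
lemma AA_mult: "vm U \<Longrightarrow> vm V \<Longrightarrow> mk U \<otimes>\<^bsub>AA\<^esub> mk V = mk (mm U V)"
  by (simp add: AA_simps mult_mk)
lemma AA_zero: "\<zero>\<^bsub>AA\<^esub> = mk mz"
  by (simp add: AA_simps zero_mk)
lemma AA_one: "\<one>\<^bsub>AA\<^esub> = mk mone"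
  by (simp add: AA_simps one_mk)

lemma A_is_ring: "ring AA"
proof (rule ringI)
  show "abelian_group AA"
  proof (rule abelian_groupI)
    fix x y assume "x \<in> carrier AA" "y \<in> carrier AA"
    then obtain U V where "vm U" "x = mk U" "vm V" "y = mk V" by (metis carrierE)
    then show "x \<oplus>\<^bsub>AA\<^esub> y \<in> carrier AA" by (simp add: AA_add vm_madd mk_in)
  next
    show "\<zero>\<^bsub>AA\<^esub> \<in> carrier AA" by (simp add: AA_zero vm_mz mk_in)
  next
    fix x y z assume "x \<in> carrier AA" "y \<in> carrier AA" "z \<in> carrier AA"
    then obtain U V W where "vm U" "x = mk U" "vm V" "y = mk V" "vm W" "z = mk W" by (metis carrierE)
    then show "x \<oplus>\<^bsub>AA\<^esub> y \<oplus>\<^bsub>AA\<^esub> z = x \<oplus>\<^bsub>AA\<^esub> (y \<oplus>\<^bsub>AA\<^esub> z)"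
      by (simp add: AA_add vm_madd) (simp add: madd_def vmD a_assoc)
  next
    fix x y assume "x \<in> carrier AA" "y \<in> carrier AA"
    then obtain U V where "vm U" "x = mk U" "vm V" "y = mk V" by (metis carrierE)
    then show "x \<oplus>\<^bsub>AA\<^esub> y = y \<oplus>\<^bsub>AA\<^esub> x"
      by (simp add: AA_add vm_madd) (simp add: madd_def vmD a_comm)
  next
    fix x assume "x \<in> carrier AA"
    then obtain U where "vm U" "x = mk U" by (metis carrierE)
    then show "\<zero>\<^bsub>AA\<^esub> \<oplus>\<^bsub>AA\<^esub> x = x"
      by (simp add: AA_add AA_zero vm_mz) (simp add: madd_def mz_def vmD)
  next
    fix x assume "x \<in> carrier AA"
    then obtain U where U: "vm U" "x = mk U" by (metis carrierE)
    have "mk (mneg U) \<oplus>\<^bsub>AA\<^esub> x = \<zero>\<^bsub>AA\<^esub>"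
      using U by (simp add: AA_add AA_zero vm_mneg) (simp add: madd_def mz_def mneg_def vmD l_neg)
    moreover have "mk (mneg U) \<in> carrier AA" using U by (simp add: vm_mneg mk_in)
    ultimately show "\<exists>y\<in>carrier AA. y \<oplus>\<^bsub>AA\<^esub> x = \<zero>\<^bsub>AA\<^esub>" by blast
  qed
next
  show "monoid AA"
  proof (rule monoidI)
    fix x y assume "x \<in> carrier AA" "y \<in> carrier AA"
    then obtain U V where "vm U" "x = mk U" "vm V" "y = mk V" by (metis carrierE)
    then show "x \<otimes>\<^bsub>AA\<^esub> y \<in> carrier AA" by (simp add: AA_mult vm_mm mk_in)
  next
    show "\<one>\<^bsub>AA\<^esub> \<in> carrier AA" by (simp add: AA_one vm_mone mk_in)
  next
    fix x y z assume "x \<in> carrier AA" "y \<in> carrier AA" "z \<in> carrier AA"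
    then obtain U V W where "vm U" "x = mk U" "vm V" "y = mk V" "vm W" "z = mk W" by (metis carrierE)
    then show "x \<otimes>\<^bsub>AA\<^esub> y \<otimes>\<^bsub>AA\<^esub> z = x \<otimes>\<^bsub>AA\<^esub> (y \<otimes>\<^bsub>AA\<^esub> z)"
      by (simp add: AA_mult vm_mm mm_assoc vm_cm)
  next
    fix x assume "x \<in> carrier AA"
    then obtain U where "vm U" "x = mk U" by (metis carrierE)
    then show "\<one>\<^bsub>AA\<^esub> \<otimes>\<^bsub>AA\<^esub> x = x"
      by (simp add: AA_mult AA_one vm_mone) (intro mk_cong mm_mone_l vm_cm)
  next
    fix x assume "x \<in> carrier AA"
    then obtain U where "vm U" "x = mk U" by (metis carrierE)
    then show "x \<otimes>\<^bsub>AA\<^esub> \<one>\<^bsub>AA\<^esub> = x"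
      by (simp add: AA_mult AA_one vm_mone) (intro mk_cong mm_mone_r vm_cm)
  qed
next
  fix x y z assume "x \<in> carrier AA" "y \<in> carrier AA" "z \<in> carrier AA"
  then obtain U V W where "vm U" "x = mk U" "vm V" "y = mk V" "vm W" "z = mk W" by (metis carrierE)
  then show "(x \<oplus>\<^bsub>AA\<^esub> y) \<otimes>\<^bsub>AA\<^esub> z = x \<otimes>\<^bsub>AA\<^esub> z \<oplus>\<^bsub>AA\<^esub> y \<otimes>\<^bsub>AA\<^esub> z"
    by (simp add: AA_mult AA_add vm_mm vm_madd mm_ldistr vm_cm)
next
  fix x y z assume "x \<in> carrier AA" "y \<in> carrier AA" "z \<in> carrier AA"
  then obtain U V W where "vm U" "x = mk U" "vm V" "y = mk V" "vm W" "z = mk W" by (metis carrierE)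
  then show "z \<otimes>\<^bsub>AA\<^esub> (x \<oplus>\<^bsub>AA\<^esub> y) = z \<otimes>\<^bsub>AA\<^esub> x \<oplus>\<^bsub>AA\<^esub> z \<otimes>\<^bsub>AA\<^esub> y"
    by (simp add: AA_mult AA_add vm_mm vm_madd mm_rdistr vm_cm)
qed

end

sublocale dsys \<subseteq> A: ring "A_ring R d I"
  by (rule A_is_ring)


context dsys
begin

lemma AA_neg: "vm U \<Longrightarrow> \<ominus>\<^bsub>AA\<^esub> mk U = mk (mneg U)"
  by (rule A.minus_equality)
     (simp_all add: AA_add AA_zero vm_mneg mk_in, simp add: madd_def mz_def mneg_def vmD l_neg)

lemma AA_minus: "vm U \<Longrightarrow> vm V \<Longrightarrow> mk U \<ominus>\<^bsub>AA\<^esub> mk V = mk (madd U (mneg V))"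
  by (simp add: a_minus_def AA_neg AA_add vm_mneg)

lemma vm_finsum: assumes "finite K" "\<And>k. k \<in> K \<Longrightarrow> vm (Us k)"
  shows "vm (\<lambda>i l. \<Oplus>k\<in>K. Us k i l)"
proof -
  have c: "(\<Oplus>k\<in>K. Us k i l) \<in> carrier R" for i l
    using assms vmD by (intro finsum_closed) (auto simp: Pi_def)
  have "(\<Oplus>k\<in>K. Us k i l) \<in> I i l" if "i \<in> {1..d}" "l \<in> {1..d}" for i l
    by (rule finsum_ideal[OF idl]) (use that assms vmI in auto)
  then show ?thesis unfolding vm_def cm_def using c by blast
qed

lemma AA_finsum: assumes "finite K" "\<And>k. k \<in> K \<Longrightarrow> vm (Us k)"
  shows "finsum AA (\<lambda>k. mk (Us k)) K = mk (\<lambda>i l. \<Oplus>k\<in>K. Us k i l)"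
  using assms
proof (induction K rule: finite_induct)
  case empty
  then show ?case by (simp add: AA_zero mz_def)
next
  case (insert x F)
  have "finsum AA (\<lambda>k. mk (Us k)) (insert x F) = mk (Us x) \<oplus>\<^bsub>AA\<^esub> finsum AA (\<lambda>k. mk (Us k)) F"
    using insert by (intro A.finsum_insert) (auto intro: mk_in)
  also have "\<dots> = mk (Us x) \<oplus>\<^bsub>AA\<^esub> mk (\<lambda>i l. \<Oplus>k\<in>F. Us k i l)" using insert by simp
  also have "\<dots> = mk (madd (Us x) (\<lambda>i l. \<Oplus>k\<in>F. Us k i l))"
    using insert by (intro AA_add vm_finsum) auto
  also have "\<dots> = mk (\<lambda>i l. \<Oplus>k\<in>insert x F. Us k i l)"
    unfolding madd_def using insert by (intro arg_cong[where f=mk] ext) (simp add: vmD Pi_def)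
  finally show ?case .
qed

definition mu :: "nat \<Rightarrow> nat \<Rightarrow> 'a \<Rightarrow> nat \<Rightarrow> nat \<Rightarrow> 'a" where
  "mu a b x = (\<lambda>i j. if i = a \<and> j = b then x else \<zero>)"

definition fm :: "nat \<Rightarrow> nat \<Rightarrow> nat \<Rightarrow> 'a" where
  "fm j = (\<lambda>a b. if a = b \<and> j < a then \<one> else \<zero>)"

lemma cm_mu: "x \<in> carrier R \<Longrightarrow> cm (mu a b x)" unfolding cm_def mu_def by auto
lemma cm_fm: "cm (fm j)" unfolding cm_def fm_def by auto

lemma vm_mu: "x \<in> I a b \<Longrightarrow> a \<in> {1..d+1} \<Longrightarrow> b \<in> {1..d+1} \<Longrightarrow> vm (mu a b x)"
  unfolding vm_def cm_def mu_def using Izero Icarr by auto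

lemma vm_fm: "vm (fm j)"
  unfolding vm_def cm_def fm_def using Izero full by auto

lemma mm_mu_l: assumes "cm V" "x \<in> carrier R"
  shows "mm (mu a b x) V i l = (if i = a \<and> b \<in> {1..d} then x \<otimes> V b l else \<zero>)"
proof (cases "i = a \<and> b \<in> {1..d}")
  case True
  have "mm (mu a b x) V i l = (\<Oplus>m\<in>{1..d}. if b = m then x \<otimes> V m l else \<zero>)"
    unfolding mm_def mu_def using True assms cmD by (intro finsum_cong') auto
  also have "\<dots> = x \<otimes> V b l" using True assms cmD by (intro finsum_singleton) auto
  finally show ?thesis using True by simp
next
  case False
  have "mm (mu a b x) V i l = (\<Oplus>m\<in>{1..d}. \<zero>)"
    unfolding mm_def mu_def using False assms cmD by (intro finsum_cong') auto
  also have "\<dots> = \<zero>" by simp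
  finally show ?thesis by (simp only: if_not_P[OF False])
qed

lemma mm_mu_r: assumes "cm V" "x \<in> carrier R"
  shows "mm V (mu a b x) i l = (if l = b \<and> a \<in> {1..d} then V i a \<otimes> x else \<zero>)"
proof (cases "l = b \<and> a \<in> {1..d}")
  case True
  have "mm V (mu a b x) i l = (\<Oplus>m\<in>{1..d}. if a = m then V i m \<otimes> x else \<zero>)"
    unfolding mm_def mu_def using True assms cmD by (intro finsum_cong') auto
  also have "\<dots> = V i a \<otimes> x" using True assms cmD finsum_singleton[of a "{1..d}" "\<lambda>m. V i m \<otimes> x"] by auto
  finally show ?thesis using True by simp
next
  case False
  have "mm V (mu a b x) i l = (\<Oplus>m\<in>{1..d}. \<zero>)"
    unfolding mm_def mu_def using False assms cmD by (intro finsum_cong') auto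
  also have "\<dots> = \<zero>" by simp
  finally show ?thesis by (simp only: if_not_P[OF False])
qed

lemma mm_mu_mu: "x \<in> carrier R \<Longrightarrow> y \<in> carrier R \<Longrightarrow> b \<in> {1..d} \<Longrightarrow>
  mm (mu a b x) (mu b e y) = mu a e (x \<otimes> y)"
  by (intro ext) (simp add: mm_mu_l cm_mu, simp add: mu_def)

lemma mm_fm_mu: "x \<in> carrier R \<Longrightarrow> a \<in> {1..d} \<Longrightarrow> j < a \<Longrightarrow> mm (fm j) (mu a b x) = mu a b x"
  by (intro ext) (simp add: mm_mu_r cm_fm, simp add: mu_def fm_def)

lemma mm_mu_fm: "x \<in> carrier R \<Longrightarrow> b \<in> {1..d} \<Longrightarrow> j < b \<Longrightarrow> mm (mu a b x) (fm j) = mu a b x"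
  by (intro ext) (simp add: mm_mu_l cm_fm, simp add: mu_def fm_def)

lemma finsum_diag: assumes "finite K"
  shows "(\<Oplus>k\<in>K. if i = k \<and> l = k then \<one> else \<zero>) = (if i = l \<and> i \<in> K then \<one> else \<zero>)"
proof (cases "i = l \<and> i \<in> K")
  case True
  have "(\<Oplus>k\<in>K. if i = k \<and> l = k then \<one> else \<zero>) = (\<Oplus>k\<in>K. if i = k then \<one> else \<zero>)"
    using True by (intro finsum_cong') auto
  also have "\<dots> = \<one>"
  proof -
    have "i \<in> K" using True by blast
    then have "(\<Oplus>j\<in>K. if i = j then \<one> else \<zero>) = \<one>" using finsum_singleton[OF _ assms, of i "\<lambda>_. \<one>"] by simp
    then show ?thesis by simp
  qed
  finally show ?thesis by (simp only: if_P[OF True])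
next
  case False
  have "(\<Oplus>k\<in>K. if i = k \<and> l = k then \<one> else \<zero>) = (\<Oplus>k\<in>K. \<zero>)"
    using False by (intro finsum_cong') auto
  then show ?thesis by (simp only: if_not_P[OF False] finsum_zero)
qed

lemma Ae_mk: "k \<in> {1..d} \<Longrightarrow> A_e R d I k = mk (mu k k \<one>)"
  unfolding A_e_def mk_def mu_def A_zero_def using a_rcos_zero[OF idl Izero] by (intro ext) auto

lemma Af_mk: "A_f R d I j = mk (fm j)"
proof -
  have "A_f R d I j = finsum AA (\<lambda>k. mk (mu k k \<one>)) {j<..d}"
    unfolding A_f_def using Ae_mk by (intro A.finsum_cong') (auto intro!: mk_in vm_mu simp: full)
  also have "\<dots> = mk (\<lambda>i l. \<Oplus>k\<in>{j<..d}. mu k k \<one> i l)"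
    by (rule AA_finsum) (auto intro!: vm_mu simp: full)
  also have "\<dots> = mk (fm j)"
    by (rule mk_cong) (simp add: mu_def fm_def finsum_diag)
  finally show ?thesis .
qed

lemma fm_idem: "mk (mm (fm j) (fm j)) = mk (fm j)"
proof (rule mk_cong)
  fix i l assume i: "i \<in> {1..d}" and l: "l \<in> {1..d}"
  have "mm (fm j) (fm j) i l = (\<Oplus>m\<in>{1..d}. if i = m then (if m = l \<and> j < m then \<one> else \<zero>) else \<zero>)"
    unfolding mm_def fm_def by (intro finsum_cong') auto
  also have "\<dots> = (if i = l \<and> j < i then \<one> else \<zero>)"
    using finsum_singleton[of i "{1..d}" "\<lambda>m. if m = l \<and> j < m then \<one> else \<zero>"] i
    by (auto simp: Pi_def)
  finally show "mm (fm j) (fm j) i l = fm j i l" by (simp add: fm_def)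
qed

end

context dsys
begin

definition cond :: "nat \<Rightarrow> (nat \<Rightarrow> nat \<Rightarrow> 'a) \<Rightarrow> bool" where
  "cond j U \<longleftrightarrow> (\<forall>a\<in>{1..j}. \<forall>b\<in>{1..j}. U a b \<in> I a (j+1))"

definition Jset :: "nat \<Rightarrow> (nat \<Rightarrow> nat \<Rightarrow> 'a set) set" where
  "Jset j = {mk U | U. vm U \<and> cond j U}"

lemma minus_add: "x \<in> carrier R \<Longrightarrow> y \<in> carrier R \<Longrightarrow> x \<ominus> y \<oplus> y = x"
  by algebra

lemma Jset_rep: assumes j: "j \<le> d" and U: "vm U" and m: "mk U \<in> Jset j" shows "cond j U"
proof -
  obtain V where V: "vm V" "cond j V" "mk U = mk V" using m unfolding Jset_def by blast
  have e: "\<forall>a\<in>{1..d}. \<forall>b\<in>{1..d}. U a b \<ominus> V a b \<in> I a (d+1)"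
    using V(3) mk_eq_iff U V vm_cm by blast
  show ?thesis unfolding cond_def
  proof (intro ballI)
    fix a b assume a: "a \<in> {1..j}" and b: "b \<in> {1..j}"
    have a1: "a \<in> {1..d+1}" "j+1 \<in> {1..d+1}" using a j by auto
    have "U a b \<ominus> V a b \<in> I a (j+1)"
      using e a b j sub[of a "d+1" "j+1"] by auto
    moreover have "V a b \<in> I a (j+1)" using V(2) a b unfolding cond_def by blast
    ultimately have "U a b \<ominus> V a b \<oplus> V a b \<in> I a (j+1)" using Iadd[OF a1] by blast
    then show "U a b \<in> I a (j+1)" using minus_add U V vmD by simp
  qed
qed

lemma rowcond: assumes "j \<le> d" "cond j U" "vm U" "a \<in> {1..j}" "m \<in> {1..d}"
  shows "U a m \<in> I a (j+1)"
proof (cases "m \<le> j")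
  case True then show ?thesis using assms unfolding cond_def by auto
next
  case False
  have "U a m \<in> I a m" using assms vmI by auto
  then show ?thesis using sub[of a m "j+1"] assms False by auto
qed

lemma cond_mm_l: assumes j: "j \<le> d" and W: "vm W" and U: "vm U" "cond j U" shows "cond j (mm W U)"
  unfolding cond_def
proof (intro ballI)
  fix a b assume a: "a \<in> {1..j}" and b: "b \<in> {1..j}"
  show "mm W U a b \<in> I a (j+1)" unfolding mm_def
  proof (rule finsum_ideal[OF idl])
    fix m assume m: "m \<in> {1..d}"
    show "W a m \<otimes> U m b \<in> I a (j+1)"
    proof (cases "m \<le> j")
      case True
      have "W a m \<in> I a m" using W vmI a m j by auto
      moreover have "U m b \<in> I m (j+1)" using U True m b unfolding cond_def by auto
      ultimately show ?thesis using prodI[of a m "j+1"] a m j by auto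
    next
      case False
      have "W a m \<in> I a m" using W vmI a m j by auto
      then have "W a m \<in> I a (j+1)" using sub[of a m "j+1"] a m j False by auto
      then show ?thesis using Irmul[of a "j+1"] a j U vmD by auto
    qed
  qed (use a j in auto)
qed

lemma cond_mm_r: assumes j: "j \<le> d" and W: "vm W" and U: "vm U" "cond j U" shows "cond j (mm U W)"
  unfolding cond_def
proof (intro ballI)
  fix a b assume a: "a \<in> {1..j}" and b: "b \<in> {1..j}"
  show "mm U W a b \<in> I a (j+1)" unfolding mm_def
  proof (rule finsum_ideal[OF idl])
    fix m assume m: "m \<in> {1..d}"
    have "U a m \<in> I a (j+1)" using rowcond[OF j U(2,1) a m] .
    then show "U a m \<otimes> W m b \<in> I a (j+1)" using Irmul[of a "j+1"] a j W vmD by auto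
  qed (use a j in auto)
qed

lemma Jset_sub: "Jset j \<subseteq> carrier AA"
  unfolding Jset_def using mk_in by auto

lemma ideal_Jset: assumes j: "j \<le> d" shows "ideal (Jset j) AA"
proof (rule idealI)
  show "ring AA" by (rule A_is_ring)
  show "subgroup (Jset j) (add_monoid AA)"
  proof (rule A.add.subgroupI, goal_cases)
    case 1 show ?case using Jset_sub by simp
  next
    case 2
    have "mk mz \<in> Jset j" unfolding Jset_def cond_def using vm_mz j Izero
      by (auto simp: mz_def)
    then show ?case by blast
  next
    case (3 a)
    then obtain U where U: "vm U" "cond j U" "a = mk U" unfolding Jset_def by blast
    have "\<ominus>\<^bsub>AA\<^esub> a = mk (mneg U)" using U AA_neg by simp
    moreover have "cond j (mneg U)" using U j Ineg unfolding cond_def mneg_def by auto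
    ultimately have "\<ominus>\<^bsub>AA\<^esub> a \<in> Jset j" using U vm_mneg unfolding Jset_def by blast
    then show ?case by (simp add: a_inv_def)
  next
    case (4 a b)
    then obtain U V where U: "vm U" "cond j U" "a = mk U" and V: "vm V" "cond j V" "b = mk V"
      unfolding Jset_def by blast
    have "a \<oplus>\<^bsub>AA\<^esub> b = mk (madd U V)" using U V AA_add by simp
    moreover have "cond j (madd U V)" using U V j Iadd unfolding cond_def madd_def by auto
    ultimately show ?case using vm_madd[OF U(1) V(1)] unfolding Jset_def by auto
  qed
next
  fix a x assume a: "a \<in> Jset j" and x: "x \<in> carrier AA"
  obtain U where U: "vm U" "cond j U" "a = mk U" using a unfolding Jset_def by blast
  obtain W where W: "vm W" "x = mk W" using x by (rule carrierE)
  have "x \<otimes>\<^bsub>AA\<^esub> a = mk (mm W U)" using U W AA_mult by simp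
  then show "x \<otimes>\<^bsub>AA\<^esub> a \<in> Jset j"
    using cond_mm_l[OF j W(1) U(1,2)] vm_mm[OF W(1) U(1)] unfolding Jset_def by blast
  have "a \<otimes>\<^bsub>AA\<^esub> x = mk (mm U W)" using U W AA_mult by simp
  then show "a \<otimes>\<^bsub>AA\<^esub> x \<in> Jset j"
    using cond_mm_r[OF j W(1) U(1,2)] vm_mm[OF U(1) W(1)] unfolding Jset_def by blast
qed

lemma Af_in_Jset: "j \<le> d \<Longrightarrow> A_f R d I j \<in> Jset j"
  unfolding Af_mk Jset_def cond_def using vm_fm Izero by (auto simp: fm_def)

lemma Af_carrier: "A_f R d I j \<in> carrier AA"
  unfolding Af_mk using vm_fm mk_in by blast

lemma AJ_ideal: "ideal (A_J R d I j) AA"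
  unfolding A_J_def using Af_carrier by (intro A.genideal_ideal) auto

lemma Af_in_AJ: "A_f R d I j \<in> A_J R d I j"
  unfolding A_J_def using Af_carrier by (intro A.genideal_self') auto

lemma mu_in_AJ: assumes j: "j \<le> d" and a: "a \<in> {1..d}" and b: "b \<in> {1..d}" and x: "x \<in> I a b"
  and c: "a \<le> j \<Longrightarrow> b \<le> j \<Longrightarrow> x \<in> I a (j+1)"
  shows "mk (mu a b x) \<in> A_J R d I j"
proof -
  interpret G: ideal "A_J R d I j" AA by (rule AJ_ideal)
  have xc: "x \<in> carrier R" by (rule Icarr[of a b]) (use a b x in auto)
  have vmu: "vm (mu a b x)" using vm_mu x a b by auto
  show ?thesis
  proof (cases "j < a")
    case True
    have eq: "mk (mu a b x) = A_f R d I j \<otimes>\<^bsub>AA\<^esub> mk (mu a b x)"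
      using Af_mk AA_mult vm_fm vmu mm_fm_mu[OF xc a True] by simp
    show ?thesis by (subst eq, rule G.I_r_closed[OF Af_in_AJ mk_in[OF vmu]])
  next
    case F1: False
    show ?thesis
    proof (cases "j < b")
      case True
      have eq: "mk (mu a b x) = mk (mu a b x) \<otimes>\<^bsub>AA\<^esub> A_f R d I j"
        using Af_mk AA_mult vm_fm vmu mm_mu_fm[OF xc b True] by simp
      show ?thesis by (subst eq, rule G.I_l_closed[OF Af_in_AJ mk_in[OF vmu]])
    next
      case F2: False
      have xj: "x \<in> I a (j+1)" using c F1 F2 by simp
      show ?thesis
      proof (cases "j = d")
        case True
        have "mk (mu a b x) = mk mz"
          using xj True vmu vm_mz vm_cm Izero a b
          by (subst mk_eq_iff) (auto simp: mu_def mz_def xc a_minus_def)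
        then show ?thesis using AA_zero G.zero_closed by simp
      next
        case False
        have j1: "j+1 \<in> {1..d}" using False j by auto
        have v1: "vm (mu a (j+1) x)" using vm_mu xj a j1 by auto
        have v2: "vm (mu (j+1) b \<one>)" using vm_mu full[of "j+1" b] b j1 F2 by auto
        have "mk (mu a b x) = mk (mu a (j+1) x) \<otimes>\<^bsub>AA\<^esub> A_f R d I j \<otimes>\<^bsub>AA\<^esub> mk (mu (j+1) b \<one>)"
          using Af_mk AA_mult vm_fm v1 v2 vm_mm mm_mu_fm[OF xc j1] mm_mu_mu[OF xc one_closed j1] xc
          by simp
        moreover have "mk (mu a (j+1) x) \<otimes>\<^bsub>AA\<^esub> A_f R d I j \<in> A_J R d I j"
          using G.I_l_closed[OF Af_in_AJ] v1 mk_in by simp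
        ultimately show ?thesis using G.I_r_closed v2 mk_in by simp
      qed
    qed
  qed
qed

lemma AJ_eq: assumes j: "j \<le> d" shows "A_J R d I j = Jset j"
proof
  show "A_J R d I j \<subseteq> Jset j"
    unfolding A_J_def using A.genideal_minimal[OF ideal_Jset[OF j]] Af_in_Jset[OF j] by auto
next
  show "Jset j \<subseteq> A_J R d I j"
  proof
    fix z assume "z \<in> Jset j"
    then obtain U where U: "vm U" "cond j U" "z = mk U" unfolding Jset_def by blast
    let ?S = "{1..d} \<times> {1..d}"
    let ?T = "\<lambda>p. mu (fst p) (snd p) (U (fst p) (snd p))"
    have vT: "vm (?T p)" if "p \<in> ?S" for p
      using that U vmI by (intro vm_mu) auto
    have "finsum AA (\<lambda>p. mk (?T p)) ?S = mk (\<lambda>i l. \<Oplus>p\<in>?S. ?T p i l)"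
      using vT by (intro AA_finsum) auto
    also have "\<dots> = mk U"
    proof (rule mk_cong)
      fix i l assume i: "i \<in> {1..d}" and l: "l \<in> {1..d}"
      have "(\<Oplus>p\<in>?S. ?T p i l) = (\<Oplus>p\<in>?S. if (i, l) = p then U (fst p) (snd p) else \<zero>)"
        unfolding mu_def by (intro finsum_cong') (auto simp: U(1) vmD)
      also have "\<dots> = U i l"
        using finsum_singleton[of "(i,l)" ?S "\<lambda>p. U (fst p) (snd p)"] i l U(1) vmD by auto
      finally show "(\<Oplus>p\<in>?S. ?T p i l) = U i l" .
    qed
    finally have z: "z = finsum AA (\<lambda>p. mk (?T p)) ?S" using U by simp
    show "z \<in> A_J R d I j" unfolding z
    proof (rule A.finsum_ideal[OF AJ_ideal])
      fix p assume p: "p \<in> ?S"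
      then obtain a b where ab: "p = (a, b)" "a \<in> {1..d}" "b \<in> {1..d}" by auto
      have "mk (mu a b (U a b)) \<in> A_J R d I j"
        using mu_in_AJ[OF j ab(2,3) vmI[OF U(1) ab(2,3)]] U(2) ab unfolding cond_def by auto
      then show "mk (?T p) \<in> A_J R d I j" using ab by simp
    qed auto
  qed
qed

end

context dsys
begin

lemma J0: "A_J R d I 0 = carrier AA"
proof -
  have "Jset 0 = mk ` {U. vm U}" unfolding Jset_def cond_def by auto
  then show ?thesis using AJ_eq[of 0] carrier_mk AA_simps by simp
qed

lemma Jd: "A_J R d I d = {\<zero>\<^bsub>AA\<^esub>}"
proof -
  have "mk U = mk mz" if "vm U" "cond d U" for U
  proof (subst mk_eq_iff)
    show "cm U" "cm mz" using that vm_cm vm_mz by auto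
    show "\<forall>i\<in>{1..d}. \<forall>j\<in>{1..d}. U i j \<ominus> mz i j \<in> I i (d + 1)"
      using that unfolding cond_def mz_def by (auto simp: a_minus_def vmD)
  qed
  moreover have "cond d mz" unfolding cond_def mz_def using Izero by auto
  ultimately have "Jset d = {mk mz}" unfolding Jset_def using vm_mz by blast
  then show ?thesis using AJ_eq[of d] AA_zero by simp
qed

lemma Jsub: assumes "i \<in> {1..d}" shows "A_J R d I i \<subseteq> A_J R d I (i - 1)"
proof -
  have "cond (i-1) U" if "cond i U" for U
    unfolding cond_def
  proof (intro ballI)
    fix a b assume a: "a \<in> {1..i-1}" and b: "b \<in> {1..i-1}"
    have "U a b \<in> I a (i+1)" using that a b unfolding cond_def by auto
    moreover have "I a (i+1) \<subseteq> I a i" by (rule sub) (use a assms in auto)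
    moreover have "i - 1 + 1 = i" using assms by auto
    ultimately show "U a b \<in> I a (i - 1 + 1)" by auto
  qed
  then have "Jset i \<subseteq> Jset (i-1)" unfolding Jset_def by blast
  moreover have "A_J R d I i = Jset i" using assms by (intro AJ_eq) auto
  moreover have "A_J R d I (i-1) = Jset (i-1)" using assms by (intro AJ_eq) auto
  ultimately show ?thesis by simp
qed

lemma Jidem: "A_J R d I i \<cdot>\<^bsub>AA\<^esub> A_J R d I i = A_J R d I i"
proof
  show "A_J R d I i \<cdot>\<^bsub>AA\<^esub> A_J R d I i \<subseteq> A_J R d I i"
    using A.ideal_prod_inter[OF AJ_ideal AJ_ideal] by blast
next
  have eq: "A_f R d I i = A_f R d I i \<otimes>\<^bsub>AA\<^esub> A_f R d I i"
    using Af_mk AA_mult vm_fm fm_idem by simp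
  have "A_f R d I i \<in> A_J R d I i \<cdot>\<^bsub>AA\<^esub> A_J R d I i"
    by (subst eq, rule ideal_prod.prod[OF Af_in_AJ Af_in_AJ])
  then show "A_J R d I i \<subseteq> A_J R d I i \<cdot>\<^bsub>AA\<^esub> A_J R d I i"
    unfolding A_J_def[of R d I i]
    using A.genideal_minimal[OF A.ideal_prod_is_ideal[OF AJ_ideal AJ_ideal]]
    unfolding A_J_def by blast
qed

end

lemma hom_zero_ag:
  assumes M: "abelian_group M" and N: "abelian_group N"
    and gc: "g \<in> carrier M \<rightarrow> carrier N"
    and ga: "\<And>x y. x \<in> carrier M \<Longrightarrow> y \<in> carrier M \<Longrightarrow> g (x \<oplus>\<^bsub>M\<^esub> y) = g x \<oplus>\<^bsub>N\<^esub> g y"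
  shows "g \<zero>\<^bsub>M\<^esub> = \<zero>\<^bsub>N\<^esub>"
proof -
  interpret M: abelian_group M by fact
  interpret N: abelian_group N by fact
  have c: "g \<zero>\<^bsub>M\<^esub> \<in> carrier N" using gc by auto
  have "g \<zero>\<^bsub>M\<^esub> \<oplus>\<^bsub>N\<^esub> g \<zero>\<^bsub>M\<^esub> = g \<zero>\<^bsub>M\<^esub> \<oplus>\<^bsub>N\<^esub> \<zero>\<^bsub>N\<^esub>"
    using ga[of "\<zero>\<^bsub>M\<^esub>" "\<zero>\<^bsub>M\<^esub>"] c by simp
  then show ?thesis using N.add.l_cancel c by simp
qed

lemma hom_finsum_ag:
  assumes M: "abelian_group M" and N: "abelian_group N"
    and gc: "g \<in> carrier M \<rightarrow> carrier N"
    and ga: "\<And>x y. x \<in> carrier M \<Longrightarrow> y \<in> carrier M \<Longrightarrow> g (x \<oplus>\<^bsub>M\<^esub> y) = g x \<oplus>\<^bsub>N\<^esub> g y"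
    and fin: "finite L" and F: "F \<in> L \<rightarrow> carrier M"
  shows "g (finsum M F L) = finsum N (\<lambda>l. g (F l)) L"
  using fin F
proof (induction L rule: finite_induct)
  case empty
  interpret M: abelian_group M by fact
  interpret N: abelian_group N by fact
  show ?case using hom_zero_ag[OF M N gc ga] by simp
next
  case (insert x L)
  interpret M: abelian_group M by fact
  interpret N: abelian_group N by fact
  have "g (finsum M F (insert x L)) = g (F x \<oplus>\<^bsub>M\<^esub> finsum M F L)"
    using insert by (subst M.finsum_insert) auto
  also have "\<dots> = g (F x) \<oplus>\<^bsub>N\<^esub> g (finsum M F L)"
    using insert by (intro ga) (auto intro!: M.finsum_closed)
  also have "\<dots> = g (F x) \<oplus>\<^bsub>N\<^esub> finsum N (\<lambda>l. g (F l)) L" using insert by simp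
  also have "\<dots> = finsum N (\<lambda>l. g (F l)) (insert x L)"
    using insert gc by (subst N.finsum_insert) (auto simp: Pi_def)
  finally show ?case .
qed

lemma smult_finsum_lm:
  assumes M: "left_module S M" and s: "s \<in> carrier S"
    and fin: "finite L" and F: "F \<in> L \<rightarrow> carrier M"
  shows "s \<odot>\<^bsub>M\<^esub> finsum M F L = finsum M (\<lambda>l. s \<odot>\<^bsub>M\<^esub> F l) L"
proof -
  have ag: "abelian_group M" using M unfolding left_module_def by blast
  have sc: "s \<odot>\<^bsub>M\<^esub> x \<in> carrier M" if "x \<in> carrier M" for x
    using M s that unfolding left_module_def by blast
  have sd: "s \<odot>\<^bsub>M\<^esub> (x \<oplus>\<^bsub>M\<^esub> y) = s \<odot>\<^bsub>M\<^esub> x \<oplus>\<^bsub>M\<^esub> s \<odot>\<^bsub>M\<^esub> y" if "x \<in> carrier M" "y \<in> carrier M" for x y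
    using M s that unfolding left_module_def by blast
  show ?thesis
    using hom_finsum_ag[OF ag ag _ sd fin F] sc by auto
qed

context ring
begin

lemma SQ_carrier: assumes "ideal J R"
  shows "Xc \<in> carrier (R Quot J) \<longleftrightarrow> (\<exists>a\<in>carrier R. Xc = J +> a)"
  unfolding FactRing_def by (simp add: A_RCOSETS_def')

lemma SQ_mult: assumes "ideal J R" "a \<in> carrier R" "b \<in> carrier R"
  shows "(J +> a) \<otimes>\<^bsub>R Quot J\<^esub> (J +> b) = J +> (a \<otimes> b)"
  unfolding FactRing_def using ideal.rcoset_mult_add[OF assms] by simp

lemma SQ_add: assumes "ideal J R" "a \<in> carrier R" "b \<in> carrier R"
  shows "(J +> a) \<oplus>\<^bsub>R Quot J\<^esub> (J +> b) = J +> (a \<oplus> b)"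
  unfolding FactRing_def using ideal.a_rcos_sum[OF assms] by simp

lemma SQ_one: "\<one>\<^bsub>R Quot J\<^esub> = J +> \<one>"
  unfolding FactRing_def by simp

lemma SQ_zero: "\<zero>\<^bsub>R Quot J\<^esub> = J"
  unfolding FactRing_def by simp

lemma P_simps:
  "carrier (quot_submodule R K J) = {J +> x | x. x \<in> K}"
  "\<zero>\<^bsub>quot_submodule R K J\<^esub> = J"
  "Xc \<oplus>\<^bsub>quot_submodule R K J\<^esub> Yc = Xc <+>\<^bsub>R\<^esub> Yc"
  "Xc \<odot>\<^bsub>quot_submodule R K J\<^esub> Yc = rcoset_mult R J Xc Yc"
  unfolding quot_submodule_def by simp_all

lemma P_smult: assumes "ideal J R" "a \<in> carrier R" "x \<in> carrier R"
  shows "(J +> a) \<odot>\<^bsub>quot_submodule R K J\<^esub> (J +> x) = J +> (a \<otimes> x)"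
  unfolding P_simps using ideal.rcoset_mult_add[OF assms] by simp

lemma P_ag: assumes J: "ideal J R" and K: "ideal K R"
  shows "abelian_group (quot_submodule R K J)"
proof -
  have Kc: "x \<in> K \<Longrightarrow> x \<in> carrier R" for x using ideal.Icarr[OF K] .
  have sum: "(J +> x) <+>\<^bsub>R\<^esub> (J +> y) = J +> (x \<oplus> y)" if "x \<in> carrier R" "y \<in> carrier R" for x y
    using ideal.a_rcos_sum[OF J that] .
  have J0: "J = J +> \<zero>" using a_rcos_zero[OF J additive_subgroup.zero_closed[OF ideal.axioms(1)[OF J]]] by simp
  have K0: "\<zero> \<in> K" using additive_subgroup.zero_closed[OF ideal.axioms(1)[OF K]] .
  have Kadd: "x \<oplus> y \<in> K" if "x \<in> K" "y \<in> K" for x y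
    using additive_subgroup.a_closed[OF ideal.axioms(1)[OF K] that] .
  have Kneg: "\<ominus> x \<in> K" if "x \<in> K" for x
    using additive_subgroup.a_inv_closed[OF ideal.axioms(1)[OF K] that] .
  show ?thesis
  proof (rule abelian_groupI, unfold P_simps)
    fix Xc Yc assume "Xc \<in> {J +> x |x. x \<in> K}" "Yc \<in> {J +> x |x. x \<in> K}"
    then obtain x y where "x \<in> K" "y \<in> K" "Xc = J +> x" "Yc = J +> y" by blast
    then show "Xc <+>\<^bsub>R\<^esub> Yc \<in> {J +> x |x. x \<in> K}" using sum Kc Kadd by auto
  next
    show "J \<in> {J +> x |x. x \<in> K}" using J0 K0 by blast
  next
    fix Xc Yc Zc assume "Xc \<in> {J +> x |x. x \<in> K}" "Yc \<in> {J +> x |x. x \<in> K}" "Zc \<in> {J +> x |x. x \<in> K}"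
    then obtain x y z where "x \<in> K" "y \<in> K" "z \<in> K" "Xc = J +> x" "Yc = J +> y" "Zc = J +> z" by blast
    then show "Xc <+>\<^bsub>R\<^esub> Yc <+>\<^bsub>R\<^esub> Zc = Xc <+>\<^bsub>R\<^esub> (Yc <+>\<^bsub>R\<^esub> Zc)" using sum Kc by (simp add: a_assoc)
  next
    fix Xc Yc assume "Xc \<in> {J +> x |x. x \<in> K}" "Yc \<in> {J +> x |x. x \<in> K}"
    then obtain x y where "x \<in> K" "y \<in> K" "Xc = J +> x" "Yc = J +> y" by blast
    then show "Xc <+>\<^bsub>R\<^esub> Yc = Yc <+>\<^bsub>R\<^esub> Xc" using sum Kc by (simp add: a_comm)
  next
    fix Xc assume "Xc \<in> {J +> x |x. x \<in> K}"
    then obtain x where "x \<in> K" "Xc = J +> x" by blast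
    then show "J <+>\<^bsub>R\<^esub> Xc = Xc" using sum Kc J0 by (metis l_zero zero_closed)
  next
    fix Xc assume "Xc \<in> {J +> x |x. x \<in> K}"
    then obtain x where x: "x \<in> K" "Xc = J +> x" by blast
    have "(J +> \<ominus> x) <+>\<^bsub>R\<^esub> Xc = J" using x sum Kc J0 by (simp add: l_neg)
    then show "\<exists>Yc\<in>{J +> x |x. x \<in> K}. Yc <+>\<^bsub>R\<^esub> Xc = J" using Kneg x by blast
  qed
qed

lemma Sobt: assumes "ideal J R" "Ac \<in> carrier (R Quot J)"
  obtains a where "a \<in> carrier R" "Ac = J +> a"
  using SQ_carrier[OF assms(1)] assms(2) by blast

lemma Pobt: assumes "Xc \<in> carrier (quot_submodule R K J)"
  obtains x where "x \<in> K" "Xc = J +> x"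
  using assms unfolding P_simps by blast

lemma P_module: assumes J: "ideal J R" and K: "ideal K R"
  shows "left_module (R Quot J) (quot_submodule R K J)"
proof -
  have Kc: "x \<in> K \<Longrightarrow> x \<in> carrier R" for x using ideal.Icarr[OF K] .
  have Kl: "a \<otimes> x \<in> K" if "x \<in> K" "a \<in> carrier R" for a x using ideal.I_l_closed[OF K that] .
  note SQ = SQ_carrier[OF J]
  have sum: "(J +> x) <+>\<^bsub>R\<^esub> (J +> y) = J +> (x \<oplus> y)" if "x \<in> carrier R" "y \<in> carrier R" for x y
    using ideal.a_rcos_sum[OF J that] .
  show ?thesis unfolding left_module_def
  proof (intro conjI ballI)
    show "ring (R Quot J)" using ideal.quotient_is_ring[OF J] .
    show "abelian_group (quot_submodule R K J)" using P_ag[OF J K] .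
  next
    fix Ac Xc assume A1: "Ac \<in> carrier (R Quot J)" and X1: "Xc \<in> carrier (quot_submodule R K J)"
    obtain a where "a \<in> carrier R" "Ac = J +> a" using Sobt[OF J A1] .
    moreover obtain x where "x \<in> K" "Xc = J +> x" using Pobt[OF X1] .
    ultimately show "Ac \<odot>\<^bsub>quot_submodule R K J\<^esub> Xc \<in> carrier (quot_submodule R K J)"
      using P_smult[OF J] Kc Kl unfolding P_simps(1) by blast
  next
    fix Ac Bc Xc assume A1: "Ac \<in> carrier (R Quot J)" and B1: "Bc \<in> carrier (R Quot J)" and X1: "Xc \<in> carrier (quot_submodule R K J)"
    obtain a where "a \<in> carrier R" "Ac = J +> a" using Sobt[OF J A1] .
    moreover obtain b where "b \<in> carrier R" "Bc = J +> b" using Sobt[OF J B1] .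
    moreover obtain x where "x \<in> K" "Xc = J +> x" using Pobt[OF X1] .
    ultimately show "(Ac \<oplus>\<^bsub>R Quot J\<^esub> Bc) \<odot>\<^bsub>quot_submodule R K J\<^esub> Xc =
         Ac \<odot>\<^bsub>quot_submodule R K J\<^esub> Xc \<oplus>\<^bsub>quot_submodule R K J\<^esub> Bc \<odot>\<^bsub>quot_submodule R K J\<^esub> Xc"
    proof -
      assume h: "a \<in> carrier R" "Ac = J +> a" "b \<in> carrier R" "Bc = J +> b" "x \<in> K" "Xc = J +> x"
      have xc: "x \<in> carrier R" using Kc h by blast
      have "(Ac \<oplus>\<^bsub>R Quot J\<^esub> Bc) \<odot>\<^bsub>quot_submodule R K J\<^esub> Xc = J +> ((a \<oplus> b) \<otimes> x)"
        using h SQ_add[OF J, of a b] P_smult[OF J, of "a \<oplus> b" x] xc by simp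
      also have "\<dots> = (J +> (a \<otimes> x)) <+>\<^bsub>R\<^esub> (J +> (b \<otimes> x))"
        using h xc sum[of "a \<otimes> x" "b \<otimes> x"] l_distr by simp
      also have "\<dots> = Ac \<odot>\<^bsub>quot_submodule R K J\<^esub> Xc \<oplus>\<^bsub>quot_submodule R K J\<^esub> Bc \<odot>\<^bsub>quot_submodule R K J\<^esub> Xc"
        using h xc P_smult[OF J] by (simp add: P_simps(3))
      finally show ?thesis .
    qed
  next
    fix Ac Xc Yc assume A1: "Ac \<in> carrier (R Quot J)" and X1: "Xc \<in> carrier (quot_submodule R K J)" and Y1: "Yc \<in> carrier (quot_submodule R K J)"
    obtain a where "a \<in> carrier R" "Ac = J +> a" using Sobt[OF J A1] .
    moreover obtain x where "x \<in> K" "Xc = J +> x" using Pobt[OF X1] .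
    moreover obtain y where "y \<in> K" "Yc = J +> y" using Pobt[OF Y1] .
    ultimately show "Ac \<odot>\<^bsub>quot_submodule R K J\<^esub> (Xc \<oplus>\<^bsub>quot_submodule R K J\<^esub> Yc) =
         Ac \<odot>\<^bsub>quot_submodule R K J\<^esub> Xc \<oplus>\<^bsub>quot_submodule R K J\<^esub> Ac \<odot>\<^bsub>quot_submodule R K J\<^esub> Yc"
    proof -
      assume h: "a \<in> carrier R" "Ac = J +> a" "x \<in> K" "Xc = J +> x" "y \<in> K" "Yc = J +> y"
      have xc: "x \<in> carrier R" "y \<in> carrier R" using Kc h by blast+
      have "Ac \<odot>\<^bsub>quot_submodule R K J\<^esub> (Xc \<oplus>\<^bsub>quot_submodule R K J\<^esub> Yc) = J +> (a \<otimes> (x \<oplus> y))"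
        using h xc sum[of x y] P_smult[OF J, of a "x \<oplus> y"] by (simp add: P_simps(3))
      also have "\<dots> = (J +> (a \<otimes> x)) <+>\<^bsub>R\<^esub> (J +> (a \<otimes> y))"
        using h xc sum[of "a \<otimes> x" "a \<otimes> y"] r_distr by simp
      also have "\<dots> = Ac \<odot>\<^bsub>quot_submodule R K J\<^esub> Xc \<oplus>\<^bsub>quot_submodule R K J\<^esub> Ac \<odot>\<^bsub>quot_submodule R K J\<^esub> Yc"
        using h xc P_smult[OF J] by (simp add: P_simps(3))
      finally show ?thesis .
    qed
  next
    fix Ac Bc Xc assume A1: "Ac \<in> carrier (R Quot J)" and B1: "Bc \<in> carrier (R Quot J)" and X1: "Xc \<in> carrier (quot_submodule R K J)"
    obtain a where "a \<in> carrier R" "Ac = J +> a" using Sobt[OF J A1] .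
    moreover obtain b where "b \<in> carrier R" "Bc = J +> b" using Sobt[OF J B1] .
    moreover obtain x where "x \<in> K" "Xc = J +> x" using Pobt[OF X1] .
    ultimately show "(Ac \<otimes>\<^bsub>R Quot J\<^esub> Bc) \<odot>\<^bsub>quot_submodule R K J\<^esub> Xc =
         Ac \<odot>\<^bsub>quot_submodule R K J\<^esub> (Bc \<odot>\<^bsub>quot_submodule R K J\<^esub> Xc)"
    proof -
      assume h: "a \<in> carrier R" "Ac = J +> a" "b \<in> carrier R" "Bc = J +> b" "x \<in> K" "Xc = J +> x"
      have xc: "x \<in> carrier R" using Kc h by blast
      have "(Ac \<otimes>\<^bsub>R Quot J\<^esub> Bc) \<odot>\<^bsub>quot_submodule R K J\<^esub> Xc = J +> (a \<otimes> b \<otimes> x)"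
        using h SQ_mult[OF J, of a b] P_smult[OF J, of "a \<otimes> b" x] xc by simp
      also have "\<dots> = J +> (a \<otimes> (b \<otimes> x))" using h xc m_assoc by simp
      also have "\<dots> = Ac \<odot>\<^bsub>quot_submodule R K J\<^esub> (Bc \<odot>\<^bsub>quot_submodule R K J\<^esub> Xc)"
        using h xc P_smult[OF J] by simp
      finally show ?thesis .
    qed
  next
    fix Xc assume X1: "Xc \<in> carrier (quot_submodule R K J)"
    obtain x where "x \<in> K" "Xc = J +> x" using Pobt[OF X1] .
    then show "\<one>\<^bsub>R Quot J\<^esub> \<odot>\<^bsub>quot_submodule R K J\<^esub> Xc = Xc"
      using P_smult[OF J, of \<one> x] SQ_one Kc by simp
  qed
qed

end

context ring
begin

lemma P_finsum: assumes J: "ideal J R" and K: "ideal K R" and fin: "finite L"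
  and y: "\<And>l. l \<in> L \<Longrightarrow> y l \<in> K"
  shows "finsum (quot_submodule R K J) (\<lambda>l. J +> y l) L = J +> finsum R y L"
  using fin y
proof (induction L rule: finite_induct)
  case empty
  interpret Pg: abelian_group "quot_submodule R K J" by (rule P_ag[OF J K])
  show ?case
    using a_rcos_zero[OF J additive_subgroup.zero_closed[OF ideal.axioms(1)[OF J]]]
    by (simp add: P_simps(2))
next
  case (insert x L)
  interpret Pg: abelian_group "quot_submodule R K J" by (rule P_ag[OF J K])
  have Kc: "\<And>z. z \<in> K \<Longrightarrow> z \<in> carrier R" using ideal.Icarr[OF K] .
  have yc: "y \<in> L \<rightarrow> carrier R" "y x \<in> carrier R" using insert Kc by auto
  have "finsum (quot_submodule R K J) (\<lambda>l. J +> y l) (insert x L)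
      = (J +> y x) \<oplus>\<^bsub>quot_submodule R K J\<^esub> finsum (quot_submodule R K J) (\<lambda>l. J +> y l) L"
    using insert by (intro Pg.finsum_insert) (auto simp: P_simps(1))
  also have "\<dots> = (J +> y x) <+>\<^bsub>R\<^esub> (J +> finsum R y L)" using insert by (simp add: P_simps(3))
  also have "\<dots> = J +> (y x \<oplus> finsum R y L)"
    using ideal.a_rcos_sum[OF J] yc by (simp add: finsum_closed)
  also have "\<dots> = J +> finsum R y (insert x L)" using insert yc by simp
  finally show ?case .
qed

lemma dual_basis_projective:
  assumes J: "ideal J R" and K: "ideal K R" and JK: "J \<subseteq> K"
    and fin: "finite L"
    and u: "\<And>l. l \<in> L \<Longrightarrow> u l \<in> K"
    and phi_c: "\<And>l x. l \<in> L \<Longrightarrow> x \<in> K \<Longrightarrow> \<phi> l x \<in> carrier R"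
    and phi_mult: "\<And>l a x. l \<in> L \<Longrightarrow> a \<in> carrier R \<Longrightarrow> x \<in> K \<Longrightarrow> \<phi> l (a \<otimes> x) = a \<otimes> \<phi> l x"
    and phi_add: "\<And>l x y. l \<in> L \<Longrightarrow> x \<in> K \<Longrightarrow> y \<in> K \<Longrightarrow> \<phi> l (x \<oplus> y) = \<phi> l x \<oplus> \<phi> l y"
    and phi_J: "\<And>l x. l \<in> L \<Longrightarrow> x \<in> J \<Longrightarrow> \<phi> l x \<in> J"
    and dual: "\<And>x. x \<in> K \<Longrightarrow> x \<ominus> (\<Oplus>l\<in>L. \<phi> l x \<otimes> u l) \<in> J"
  shows "projective_lmod TYPE('z) (R Quot J) (quot_submodule R K J)"
proof -
  have Kc: "\<And>z. z \<in> K \<Longrightarrow> z \<in> carrier R" using ideal.Icarr[OF K] .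
  have Kadd: "x \<oplus> y \<in> K" if "x \<in> K" "y \<in> K" for x y
    using additive_subgroup.a_closed[OF ideal.axioms(1)[OF K] that] .
  have Kl: "a \<otimes> x \<in> K" if "x \<in> K" "a \<in> carrier R" for a x using ideal.I_l_closed[OF K that] .
  have PM: "left_module (R Quot J) (quot_submodule R K J)" by (rule P_module[OF J K])
  have Pag: "abelian_group (quot_submodule R K J)" by (rule P_ag[OF J K])
  have Sc: "J +> a \<in> carrier (R Quot J)" if "a \<in> carrier R" for a
    using SQ_carrier[OF J] that by blast
  have Pc: "J +> x \<in> carrier (quot_submodule R K J)" if "x \<in> K" for x
    using that unfolding P_simps by blast
  have Padd: "(J +> x) \<oplus>\<^bsub>quot_submodule R K J\<^esub> (J +> y) = J +> (x \<oplus> y)" if "x \<in> K" "y \<in> K" for x y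
    using ideal.a_rcos_sum[OF J] Kc that by (simp add: P_simps(3))
  have wd: "J +> \<phi> l x = J +> \<phi> l y" if "x \<in> K" "y \<in> K" "J +> x = J +> y" "l \<in> L" for x y l
  proof -
    have d: "x \<ominus> y \<in> J" using coset_eq_iff[OF J] that Kc by blast
    have dK: "x \<ominus> y \<in> K" using d JK by blast
    have xc: "x \<in> carrier R" "y \<in> carrier R" using that Kc by blast+
    have "x = (x \<ominus> y) \<oplus> y" using xc by algebra
    then have "\<phi> l x = \<phi> l (x \<ominus> y) \<oplus> \<phi> l y" using phi_add[OF that(4) dK that(2)] by metis
    moreover have "\<phi> l (x \<ominus> y) \<in> J" using phi_J[OF that(4) d] .
    moreover have c: "\<phi> l y \<in> carrier R" "\<phi> l (x \<ominus> y) \<in> carrier R" using phi_c that dK by auto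
    ultimately have "\<phi> l x \<ominus> \<phi> l y \<in> J"
      using c by (simp add: a_minus_def a_assoc r_neg)
    then show ?thesis using coset_eq_iff[OF J] phi_c that by blast
  qed
  show ?thesis unfolding projective_lmod_def
  proof (intro conjI allI impI)
    show "left_module (R Quot J) (quot_submodule R K J)" by (rule PM)
  next
    fix M N :: "('a set, 'z) module" and g f
    assume H: "left_module (R Quot J) M \<and> left_module (R Quot J) N \<and> g \<in> lmod_hom (R Quot J) M N \<and>
      g ` carrier M = carrier N \<and> f \<in> lmod_hom (R Quot J) (quot_submodule R K J) N"
    have MM: "left_module (R Quot J) M" and NN: "left_module (R Quot J) N" using H by auto
    have Mag: "abelian_group M" and Nag: "abelian_group N" using MM NN unfolding left_module_def by auto
    interpret M: abelian_group M by (rule Mag)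
    interpret N: abelian_group N by (rule Nag)
    have Msc: "s \<odot>\<^bsub>M\<^esub> z \<in> carrier M" if "s \<in> carrier (R Quot J)" "z \<in> carrier M" for s z
      using MM that unfolding left_module_def by blast
    have Mdist: "(s \<oplus>\<^bsub>R Quot J\<^esub> t) \<odot>\<^bsub>M\<^esub> z = s \<odot>\<^bsub>M\<^esub> z \<oplus>\<^bsub>M\<^esub> t \<odot>\<^bsub>M\<^esub> z"
      if "s \<in> carrier (R Quot J)" "t \<in> carrier (R Quot J)" "z \<in> carrier M" for s t z
      using MM that unfolding left_module_def by blast
    have Mass: "(s \<otimes>\<^bsub>R Quot J\<^esub> t) \<odot>\<^bsub>M\<^esub> z = s \<odot>\<^bsub>M\<^esub> (t \<odot>\<^bsub>M\<^esub> z)"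
      if "s \<in> carrier (R Quot J)" "t \<in> carrier (R Quot J)" "z \<in> carrier M" for s t z
      using MM that unfolding left_module_def by blast
    have gc: "g \<in> carrier M \<rightarrow> carrier N" and ga: "\<And>x y. x \<in> carrier M \<Longrightarrow> y \<in> carrier M \<Longrightarrow> g (x \<oplus>\<^bsub>M\<^esub> y) = g x \<oplus>\<^bsub>N\<^esub> g y"
      and gs: "\<And>s x. s \<in> carrier (R Quot J) \<Longrightarrow> x \<in> carrier M \<Longrightarrow> g (s \<odot>\<^bsub>M\<^esub> x) = s \<odot>\<^bsub>N\<^esub> g x"
      using H unfolding lmod_hom_def by auto
    have fc: "f \<in> carrier (quot_submodule R K J) \<rightarrow> carrier N"
      and fa: "\<And>x y. x \<in> carrier (quot_submodule R K J) \<Longrightarrow> y \<in> carrier (quot_submodule R K J) \<Longrightarrow>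
          f (x \<oplus>\<^bsub>quot_submodule R K J\<^esub> y) = f x \<oplus>\<^bsub>N\<^esub> f y"
      and fs: "\<And>s x. s \<in> carrier (R Quot J) \<Longrightarrow> x \<in> carrier (quot_submodule R K J) \<Longrightarrow>
          f (s \<odot>\<^bsub>quot_submodule R K J\<^esub> x) = s \<odot>\<^bsub>N\<^esub> f x"
      using H unfolding lmod_hom_def by auto
    have gsurj: "g ` carrier M = carrier N" using H by auto
    define m where "m l = (SOME z. z \<in> carrier M \<and> g z = f (J +> u l))" for l
    have m: "m l \<in> carrier M \<and> g (m l) = f (J +> u l)" if "l \<in> L" for l
    proof -
      have "f (J +> u l) \<in> carrier N" using fc Pc u that by auto
      then have "f (J +> u l) \<in> g ` carrier M" using gsurj by simp
      then obtain z where "z \<in> carrier M" "f (J +> u l) = g z" by (rule imageE)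
      then have "\<exists>z. z \<in> carrier M \<and> g z = f (J +> u l)" by metis
      then show ?thesis unfolding m_def by (rule someI_ex)
    qed
    define hx where "hx x = finsum M (\<lambda>l. (J +> \<phi> l x) \<odot>\<^bsub>M\<^esub> m l) L" for x
    define rep where "rep p = (SOME x. x \<in> K \<and> p = J +> x)" for p
    define h where "h p = hx (rep p)" for p
    have rep: "rep p \<in> K \<and> p = J +> rep p" if "p \<in> carrier (quot_submodule R K J)" for p
    proof -
      have "\<exists>x. x \<in> K \<and> p = J +> x" using that unfolding P_simps by blast
      then show ?thesis unfolding rep_def by (rule someI_ex)
    qed
    have summ_c: "(J +> \<phi> l x) \<odot>\<^bsub>M\<^esub> m l \<in> carrier M" if "x \<in> K" "l \<in> L" for x l
      using Msc Sc phi_c m that by blast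
    have hx_c: "hx x \<in> carrier M" if "x \<in> K" for x
      unfolding hx_def using summ_c that by (intro M.finsum_closed) auto
    have hxwd: "hx x = hx y" if "x \<in> K" "y \<in> K" "J +> x = J +> y" for x y
      unfolding hx_def using wd[OF that] by (intro M.finsum_cong') (auto intro: summ_c[OF that(2)])
    have hJ: "h (J +> x) = hx x" if "x \<in> K" for x
    proof -
      have "rep (J +> x) \<in> K \<and> J +> x = J +> rep (J +> x)" using rep Pc that by blast
      then show ?thesis unfolding h_def using hxwd that by metis
    qed
    have hom: "h \<in> lmod_hom (R Quot J) (quot_submodule R K J) M"
      unfolding lmod_hom_def
    proof (intro CollectI conjI ballI)
      show "h \<in> carrier (quot_submodule R K J) \<rightarrow> carrier M"
        unfolding h_def using rep hx_c by auto
    next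
      fix p q assume p: "p \<in> carrier (quot_submodule R K J)" and q: "q \<in> carrier (quot_submodule R K J)"
      obtain x y where xy: "x \<in> K" "p = J +> x" "y \<in> K" "q = J +> y" using rep p q by blast
      have "h (p \<oplus>\<^bsub>quot_submodule R K J\<^esub> q) = hx (x \<oplus> y)"
        using xy Padd hJ Kadd by simp
      also have "\<dots> = finsum M (\<lambda>l. (J +> \<phi> l x) \<odot>\<^bsub>M\<^esub> m l \<oplus>\<^bsub>M\<^esub> (J +> \<phi> l y) \<odot>\<^bsub>M\<^esub> m l) L"
        unfolding hx_def
      proof (intro M.finsum_cong')
        fix l assume l: "l \<in> L"
        have "J +> \<phi> l (x \<oplus> y) = (J +> \<phi> l x) \<oplus>\<^bsub>R Quot J\<^esub> (J +> \<phi> l y)"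
          using phi_add[OF l xy(1,3)] SQ_add[OF J] phi_c l xy by simp
        then show "(J +> \<phi> l (x \<oplus> y)) \<odot>\<^bsub>M\<^esub> m l = (J +> \<phi> l x) \<odot>\<^bsub>M\<^esub> m l \<oplus>\<^bsub>M\<^esub> (J +> \<phi> l y) \<odot>\<^bsub>M\<^esub> m l"
          using Mdist Sc phi_c m l xy by simp
      qed (use summ_c xy in auto)
      also have "\<dots> = hx x \<oplus>\<^bsub>M\<^esub> hx y"
        unfolding hx_def using summ_c xy by (intro M.finsum_addf) auto
      also have "\<dots> = h p \<oplus>\<^bsub>M\<^esub> h q" using hJ xy by simp
      finally show "h (p \<oplus>\<^bsub>quot_submodule R K J\<^esub> q) = h p \<oplus>\<^bsub>M\<^esub> h q" .
    next
      fix s p assume s: "s \<in> carrier (R Quot J)" and p: "p \<in> carrier (quot_submodule R K J)"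
      obtain a where a: "a \<in> carrier R" "s = J +> a" using Sobt[OF J s] .
      obtain x where x: "x \<in> K" "p = J +> x" using rep p by blast
      have "h (s \<odot>\<^bsub>quot_submodule R K J\<^esub> p) = hx (a \<otimes> x)"
        using a x P_smult[OF J] Kc hJ Kl by simp
      also have "\<dots> = finsum M (\<lambda>l. s \<odot>\<^bsub>M\<^esub> ((J +> \<phi> l x) \<odot>\<^bsub>M\<^esub> m l)) L"
        unfolding hx_def
      proof (intro M.finsum_cong')
        fix l assume l: "l \<in> L"
        have "J +> \<phi> l (a \<otimes> x) = s \<otimes>\<^bsub>R Quot J\<^esub> (J +> \<phi> l x)"
          using phi_mult[OF l a(1) x(1)] SQ_mult[OF J] phi_c l a x by simp
        then show "(J +> \<phi> l (a \<otimes> x)) \<odot>\<^bsub>M\<^esub> m l = s \<odot>\<^bsub>M\<^esub> ((J +> \<phi> l x) \<odot>\<^bsub>M\<^esub> m l)"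
          using Mass s Sc phi_c m l x by simp
      qed (use summ_c x Msc s in auto)
      also have "\<dots> = s \<odot>\<^bsub>M\<^esub> hx x"
        unfolding hx_def using summ_c x by (intro smult_finsum_lm[OF MM s fin, symmetric]) auto
      also have "\<dots> = s \<odot>\<^bsub>M\<^esub> h p" using hJ x by simp
      finally show "h (s \<odot>\<^bsub>quot_submodule R K J\<^esub> p) = s \<odot>\<^bsub>M\<^esub> h p" .
    qed
    have lift: "g (h p) = f p" if p: "p \<in> carrier (quot_submodule R K J)" for p
    proof -
      obtain x where x: "x \<in> K" "p = J +> x" using rep p by blast
      have fsumc: "\<phi> l x \<otimes> u l \<in> K" if "l \<in> L" for l using Kl u phi_c that x by blast
      have "g (h p) = g (hx x)" using hJ x by simp
      also have "\<dots> = finsum N (\<lambda>l. g ((J +> \<phi> l x) \<odot>\<^bsub>M\<^esub> m l)) L"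
        unfolding hx_def using summ_c x by (intro hom_finsum_ag[OF Mag Nag gc ga fin]) auto
      also have "\<dots> = finsum N (\<lambda>l. f (J +> (\<phi> l x \<otimes> u l))) L"
      proof (intro N.finsum_cong')
        fix l assume l: "l \<in> L"
        have "g ((J +> \<phi> l x) \<odot>\<^bsub>M\<^esub> m l) = (J +> \<phi> l x) \<odot>\<^bsub>N\<^esub> f (J +> u l)"
          using gs Sc phi_c m l x by simp
        also have "\<dots> = f ((J +> \<phi> l x) \<odot>\<^bsub>quot_submodule R K J\<^esub> (J +> u l))"
          using fs Sc phi_c Pc u l x by simp
        also have "\<dots> = f (J +> (\<phi> l x \<otimes> u l))"
          using P_smult[OF J] phi_c Kc u l x by simp
        finally show "g ((J +> \<phi> l x) \<odot>\<^bsub>M\<^esub> m l) = f (J +> (\<phi> l x \<otimes> u l))" .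
      qed (use fc Pc fsumc in auto)
      also have "\<dots> = f (finsum (quot_submodule R K J) (\<lambda>l. J +> (\<phi> l x \<otimes> u l)) L)"
        using Pc fsumc by (intro hom_finsum_ag[OF Pag Nag fc fa fin, symmetric]) auto
      also have "\<dots> = f (J +> (\<Oplus>l\<in>L. \<phi> l x \<otimes> u l))"
        using P_finsum[OF J K fin] fsumc by simp
      also have "\<dots> = f p"
      proof -
        have c: "(\<Oplus>l\<in>L. \<phi> l x \<otimes> u l) \<in> carrier R"
          using fsumc Kc by (intro finsum_closed) auto
        have "J +> x = J +> (\<Oplus>l\<in>L. \<phi> l x \<otimes> u l)"
          using coset_eq_iff[OF J] dual[OF x(1)] c Kc x by blast
        then show ?thesis using x by simp
      qed
      finally show ?thesis .
    qed
    show "\<exists>h\<in>lmod_hom (R Quot J) (quot_submodule R K J) M. \<forall>p\<in>carrier (quot_submodule R K J). g (h p) = f p"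
      using hom lift by blast
  qed
qed

end

context dsys
begin

definition rp :: "(nat \<Rightarrow> nat \<Rightarrow> 'a set) \<Rightarrow> nat \<Rightarrow> nat \<Rightarrow> 'a" where
  "rp a = (SOME U. vm U \<and> a = mk U)"

lemma rp: assumes "a \<in> carrier AA" shows "vm (rp a) \<and> a = mk (rp a)"
proof -
  obtain U where "vm U" "a = mk U" using carrierE[OF assms] .
  then have "\<exists>U. vm U \<and> a = mk U" by blast
  then show ?thesis unfolding rp_def by (rule someI_ex)
qed

lemma mk_mm_cong: assumes U: "vm U" "vm U'" "mk U = mk U'" and V: "cm V"
  shows "mk (mm U V) = mk (mm U' V)"
proof -
  have e: "\<forall>a\<in>{1..d}. \<forall>b\<in>{1..d}. U a b \<ominus> U' a b \<in> I a (d+1)" using mk_eq_iff U vm_cm by blast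
  show ?thesis
  proof (subst mk_eq_iff, (intro cm_mm vm_cm U V)+, intro ballI)
    fix a b assume a: "a \<in> {1..d}" and b: "b \<in> {1..d}"
    have a1: "a \<in> {1..d+1}" "d+1 \<in> {1..d+1}" using a by auto
    have "mm U V a b \<in> I a (d+1) +> mm U' V a b"
      unfolding mm_def
    proof (rule rcos_finsum[OF idl[OF a1]])
      fix m assume m: "m \<in> {1..d}"
      have c: "U a m \<in> carrier R" "U' a m \<in> carrier R" "V m b \<in> carrier R" using U V vmD cmD by auto
      have "U a m \<otimes> V m b \<ominus> U' a m \<otimes> V m b = (U a m \<ominus> U' a m) \<otimes> V m b" using c by algebra
      moreover have "(U a m \<ominus> U' a m) \<otimes> V m b \<in> I a (d+1)" using Irmul[OF a1] e a m c by auto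
      ultimately show "U a m \<otimes> V m b \<in> I a (d+1) +> U' a m \<otimes> V m b"
        using rcos_mem_iff[OF idl[OF a1]] c by auto
    qed (simp_all add: vmD[OF U(1)] vmD[OF U(2)] cmD[OF V])
    then show "mm U V a b \<ominus> mm U' V a b \<in> I a (d+1)"
      using rcos_mem_iff[OF idl[OF a1]] cmD[OF cm_mm[OF vm_cm[OF U(1)] V]] cmD[OF cm_mm[OF vm_cm[OF U(2)] V]] by blast
  qed
qed

context
  fixes i :: nat
  assumes i: "i \<in> {1..d}"
begin

lemma eqK: "A_J R d I (i-1) = Jset (i-1)" by (rule AJ_eq) (use i in auto)
lemma eqJ: "A_J R d I i = Jset i" by (rule AJ_eq) (use i in auto)

definition phi :: "nat \<Rightarrow> (nat \<Rightarrow> nat \<Rightarrow> 'a set) \<Rightarrow> nat \<Rightarrow> nat \<Rightarrow> 'a set" where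
  "phi l a = mk (mm (rp a) (mu l i \<one>))"

definition uu :: "nat \<Rightarrow> nat \<Rightarrow> nat \<Rightarrow> 'a set" where
  "uu l = mk (mu i l \<one>)"

lemma mm_col: "cm U \<Longrightarrow> l \<in> {1..d} \<Longrightarrow> mm U (mu l i \<one>) a b = (if b = i then U a l else \<zero>)"
  by (simp add: mm_mu_r cmD)

lemma K_rep: assumes "x \<in> A_J R d I (i-1)" shows "vm (rp x) \<and> x = mk (rp x) \<and> cond (i-1) (rp x)"
proof -
  have x: "x \<in> carrier AA" by (rule ideal.Icarr[OF AJ_ideal assms])
  have "x \<in> Jset (i-1)" using assms eqK by simp
  moreover have "i - 1 \<le> d" using i by auto
  ultimately show ?thesis using rp[OF x] Jset_rep[of "i-1" "rp x"] by metis
qed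

lemma vm_phi_rep: assumes "vm U" "cond (i-1) U" "l \<in> {1..i}" shows "vm (mm U (mu l i \<one>))"
proof -
  have l: "l \<in> {1..d}" using assms i by auto
  have "mm U (mu l i \<one>) a b \<in> I a b" if "a \<in> {1..d}" "b \<in> {1..d}" for a b
  proof (cases "b = i")
    case True
    have "U a l \<in> I a i"
    proof (cases "a < i \<and> l < i")
      case True
      have a1: "a \<in> {1..i-1}" "l \<in> {1..i-1}" using True that assms(3) by auto
      have "U a l \<in> I a (i - 1 + 1)" using assms(2) a1 unfolding cond_def by blast
      moreover have "i - 1 + 1 = i" using i by auto
      ultimately show ?thesis by simp
    next
      case False
      then have "l = i \<or> a \<ge> i" using assms by auto
      then show ?thesis
      proof
        assume "l = i" then show ?thesis using vmI[OF assms(1)] that l by auto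
      next
        assume "a \<ge> i" then show ?thesis using full[of a i] that i vmD[OF assms(1)] by auto
      qed
    qed
    then show ?thesis using True mm_col vm_cm assms l by simp
  next
    case False
    then show ?thesis using mm_col vm_cm assms l Izero that by simp
  qed
  then show ?thesis unfolding vm_def using cm_mm[OF vm_cm[OF assms(1)] cm_mu[OF one_closed]] by blast
qed

lemma phi_c: assumes l: "l \<in> {1..i}" and x: "x \<in> A_J R d I (i-1)" shows "phi l x \<in> carrier AA"
proof -
  have "vm (rp x)" "cond (i-1) (rp x)" using K_rep[OF x] by blast+
  then show ?thesis unfolding phi_def by (intro mk_in vm_phi_rep l)
qed

lemma phi_eq: assumes "vm U" "x = mk U" "x \<in> A_J R d I (i-1)"
  shows "phi l x = mk (mm U (mu l i \<one>))"
  unfolding phi_def using K_rep[OF assms(3)] assms by (intro mk_mm_cong cm_mu one_closed) auto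

lemma phi_mult: assumes l: "l \<in> {1..i}" and a: "a \<in> carrier AA" and x: "x \<in> A_J R d I (i-1)"
  shows "phi l (a \<otimes>\<^bsub>AA\<^esub> x) = a \<otimes>\<^bsub>AA\<^esub> phi l x"
proof -
  obtain W where W: "vm W" "a = mk W" using carrierE a by blast
  define Ux where "Ux = rp x"
  have phx: "phi l x = mk (mm Ux (mu l i \<one>))" unfolding phi_def Ux_def ..
  have U: "vm Ux" "x = mk Ux" "cond (i-1) Ux" using K_rep[OF x, folded Ux_def] by blast+
  have ax: "a \<otimes>\<^bsub>AA\<^esub> x = mk (mm W Ux)" using W U AA_mult by simp
  have axK: "a \<otimes>\<^bsub>AA\<^esub> x \<in> A_J R d I (i-1)" using ideal.I_l_closed[OF AJ_ideal x a] .
  have "phi l (a \<otimes>\<^bsub>AA\<^esub> x) = mk (mm (mm W Ux) (mu l i \<one>))"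
    using phi_eq[OF vm_mm[OF W(1) U(1)] ax axK] .
  also have "\<dots> = mk (mm W (mm Ux (mu l i \<one>)))"
    using mm_assoc W U vm_cm cm_mu by simp
  also have "\<dots> = a \<otimes>\<^bsub>AA\<^esub> phi l x"
    using AA_mult[OF W(1) vm_phi_rep[OF U(1,3) l]] W phx by simp
  finally show ?thesis .
qed

lemma phi_add: assumes l: "l \<in> {1..i}" and x: "x \<in> A_J R d I (i-1)" and y: "y \<in> A_J R d I (i-1)"
  shows "phi l (x \<oplus>\<^bsub>AA\<^esub> y) = phi l x \<oplus>\<^bsub>AA\<^esub> phi l y"
proof -
  define Ux where "Ux = rp x"
  define Uy where "Uy = rp y"
  have phx: "phi l x = mk (mm Ux (mu l i \<one>))" unfolding phi_def Ux_def ..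
  have phy: "phi l y = mk (mm Uy (mu l i \<one>))" unfolding phi_def Uy_def ..
  have U: "vm Ux" "x = mk Ux" "cond (i-1) Ux" using K_rep[OF x, folded Ux_def] by blast+
  have V: "vm Uy" "y = mk Uy" "cond (i-1) Uy" using K_rep[OF y, folded Uy_def] by blast+
  have xy: "x \<oplus>\<^bsub>AA\<^esub> y = mk (madd Ux Uy)" using U V AA_add by simp
  have xyK: "x \<oplus>\<^bsub>AA\<^esub> y \<in> A_J R d I (i-1)"
    using additive_subgroup.a_closed[OF ideal.axioms(1)[OF AJ_ideal] x y] .
  have "phi l (x \<oplus>\<^bsub>AA\<^esub> y) = mk (mm (madd Ux Uy) (mu l i \<one>))"
    using phi_eq[OF vm_madd[OF U(1) V(1)] xy xyK] .
  also have "\<dots> = mk (madd (mm Ux (mu l i \<one>)) (mm Uy (mu l i \<one>)))"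
    using mm_ldistr U V vm_cm cm_mu by simp
  also have "\<dots> = phi l x \<oplus>\<^bsub>AA\<^esub> phi l y"
    using AA_add[OF vm_phi_rep[OF U(1,3) l] vm_phi_rep[OF V(1,3) l]] phx phy by simp
  finally show ?thesis .
qed

lemma phi_J: assumes l: "l \<in> {1..i}" and x: "x \<in> A_J R d I i"
  shows "phi l x \<in> A_J R d I i"
proof -
  have xK: "x \<in> A_J R d I (i-1)" using Jsub[OF i] x by blast
  define Ux where "Ux = rp x"
  have phx: "phi l x = mk (mm Ux (mu l i \<one>))" unfolding phi_def Ux_def ..
  have U: "vm Ux" "x = mk Ux" "cond (i-1) Ux" using K_rep[OF xK, folded Ux_def] by blast+
  have "x \<in> Jset i" using x eqJ by simp
  then have ci: "cond i Ux" using Jset_rep[of i] i U by auto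
  have lc: "l \<in> {1..d}" using l i by auto
  have "cond i (mm Ux (mu l i \<one>))" unfolding cond_def
  proof (intro ballI)
    fix a b assume a: "a \<in> {1..i}" and b: "b \<in> {1..i}"
    show "mm Ux (mu l i \<one>) a b \<in> I a (i+1)"
      using mm_col[OF vm_cm[OF U(1)] lc] ci a b l Izero[of a "i+1"] i unfolding cond_def by auto
  qed
  then have "phi l x \<in> Jset i" unfolding phx Jset_def using vm_phi_rep[OF U(1,3) l] by blast
  then show ?thesis using eqJ by simp
qed

lemma uu_K: assumes l: "l \<in> {1..i}" shows "uu l \<in> A_J R d I (i-1)"
proof -
  have "vm (mu i l \<one>)" using vm_mu full[of i l] i l by auto
  moreover have "cond (i-1) (mu i l \<one>)" unfolding cond_def mu_def using Izero i by auto
  ultimately have "uu l \<in> Jset (i-1)" unfolding uu_def Jset_def by blast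
  then show ?thesis using eqK by simp
qed

lemma dual: assumes x: "x \<in> A_J R d I (i-1)"
  shows "x \<ominus>\<^bsub>AA\<^esub> (\<Oplus>\<^bsub>AA\<^esub>l\<in>{1..i}. phi l x \<otimes>\<^bsub>AA\<^esub> uu l) \<in> A_J R d I i"
proof -
  define Ux where "Ux = rp x"
  have phx: "\<And>l. phi l x = mk (mm Ux (mu l i \<one>))" unfolding phi_def Ux_def ..
  have U: "vm Ux" "x = mk Ux" "cond (i-1) Ux" using K_rep[OF x, folded Ux_def] by blast+
  let ?U = "Ux"
  let ?C = "\<lambda>l. mm ?U (mu l l \<one>)"
  have ic: "i \<in> {1..d}" using i .
  have Ccol: "?C l a b = (if b = l then ?U a l else \<zero>)" if "l \<in> {1..d}" for l a b
    using mm_mu_r[OF vm_cm[OF U(1)] one_closed] that vmD[OF U(1)] by simp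
  have vC: "vm (?C l)" if "l \<in> {1..i}" for l
  proof -
    have "?C l a b \<in> I a b" if "a \<in> {1..d}" "b \<in> {1..d}" for a b
      using Ccol[of l a b] \<open>l \<in> {1..i}\<close> i vmI[OF U(1)] that Izero by auto
    then show ?thesis unfolding vm_def using cm_mm[OF vm_cm[OF U(1)] cm_mu[OF one_closed]] by blast
  qed
  have trm: "phi l x \<otimes>\<^bsub>AA\<^esub> uu l = mk (?C l)" if l: "l \<in> {1..i}" for l
  proof -
    have l1: "l \<in> {1..d}" using l i by auto
    have "phi l x \<otimes>\<^bsub>AA\<^esub> uu l = mk (mm (mm ?U (mu l i \<one>)) (mu i l \<one>))"
      unfolding phx uu_def
      using AA_mult[OF vm_phi_rep[OF U(1,3) l] vm_mu[of \<one> i l]] full[of i l] i l by simp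
    also have "\<dots> = mk (?C l)"
      using mm_assoc[OF vm_cm[OF U(1)] cm_mu[OF one_closed] cm_mu[OF one_closed]] mm_mu_mu[OF one_closed one_closed ic]
      by simp
    finally show ?thesis .
  qed
  have "(\<Oplus>\<^bsub>AA\<^esub>l\<in>{1..i}. phi l x \<otimes>\<^bsub>AA\<^esub> uu l) = (\<Oplus>\<^bsub>AA\<^esub>l\<in>{1..i}. mk (?C l))"
    using trm vC mk_in by (intro A.finsum_cong') auto
  also have "\<dots> = mk (\<lambda>a b. \<Oplus>l\<in>{1..i}. ?C l a b)"
    using vC by (intro AA_finsum) auto
  finally have S: "(\<Oplus>\<^bsub>AA\<^esub>l\<in>{1..i}. phi l x \<otimes>\<^bsub>AA\<^esub> uu l) = mk (\<lambda>a b. \<Oplus>l\<in>{1..i}. ?C l a b)" .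
  have vS: "vm (\<lambda>a b. \<Oplus>l\<in>{1..i}. ?C l a b)" using vC by (intro vm_finsum) auto
  let ?D = "madd ?U (mneg (\<lambda>a b. \<Oplus>l\<in>{1..i}. ?C l a b))"
  have xD: "x \<ominus>\<^bsub>AA\<^esub> (\<Oplus>\<^bsub>AA\<^esub>l\<in>{1..i}. phi l x \<otimes>\<^bsub>AA\<^esub> uu l) = mk ?D"
    using S U AA_minus vS by simp
  have vD: "vm ?D" using vm_madd[OF U(1) vm_mneg[OF vS]] .
  have "cond i ?D" unfolding cond_def
  proof (intro ballI)
    fix a b assume a: "a \<in> {1..i}" and b: "b \<in> {1..i}"
    have "(\<Oplus>l\<in>{1..i}. ?C l a b) = (\<Oplus>l\<in>{1..i}. if b = l then ?U a l else \<zero>)"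
      using Ccol i by (intro finsum_cong') (auto simp: vmD[OF U(1)])
    also have "\<dots> = ?U a b" using finsum_singleton[of b "{1..i}" "\<lambda>l. ?U a l"] b vmD[OF U(1)] by auto
    finally have "?D a b = ?U a b \<oplus> \<ominus> ?U a b" unfolding madd_def mneg_def by simp
    also have "\<dots> = \<zero>" using vmD[OF U(1)] r_neg by simp
    finally show "?D a b \<in> I a (i+1)" using Izero a i by auto
  qed
  then have "mk ?D \<in> Jset i" unfolding Jset_def using vD by blast
  then show ?thesis using xD eqJ by simp
qed

lemma projective:
  "projective_lmod TYPE('b) (AA Quot A_J R d I i) (quot_submodule AA (A_J R d I (i - 1)) (A_J R d I i))"
proof (rule A.dual_basis_projective[where L="{1..i}" and u=uu and \<phi>=phi])
  show "ideal (A_J R d I i) AA" by (rule AJ_ideal)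
  show "ideal (A_J R d I (i-1)) AA" by (rule AJ_ideal)
  show "A_J R d I i \<subseteq> A_J R d I (i-1)" by (rule Jsub[OF i])
  show "finite {1..i}" by simp
  show "\<And>l. l \<in> {1..i} \<Longrightarrow> uu l \<in> A_J R d I (i-1)" by (rule uu_K)
  show "\<And>l x. l \<in> {1..i} \<Longrightarrow> x \<in> A_J R d I (i-1) \<Longrightarrow> phi l x \<in> carrier AA" by (rule phi_c)
  show "\<And>l a x. l \<in> {1..i} \<Longrightarrow> a \<in> carrier AA \<Longrightarrow> x \<in> A_J R d I (i-1) \<Longrightarrow>
     phi l (a \<otimes>\<^bsub>AA\<^esub> x) = a \<otimes>\<^bsub>AA\<^esub> phi l x" by (rule phi_mult)
  show "\<And>l x y. l \<in> {1..i} \<Longrightarrow> x \<in> A_J R d I (i-1) \<Longrightarrow> y \<in> A_J R d I (i-1) \<Longrightarrow>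
     phi l (x \<oplus>\<^bsub>AA\<^esub> y) = phi l x \<oplus>\<^bsub>AA\<^esub> phi l y" by (rule phi_add)
  show "\<And>l x. l \<in> {1..i} \<Longrightarrow> x \<in> A_J R d I i \<Longrightarrow> phi l x \<in> A_J R d I i" by (rule phi_J)
  show "\<And>x. x \<in> A_J R d I (i-1) \<Longrightarrow>
     x \<ominus>\<^bsub>AA\<^esub> (\<Oplus>\<^bsub>AA\<^esub>l\<in>{1..i}. phi l x \<otimes>\<^bsub>AA\<^esub> uu l) \<in> A_J R d I i" by (rule dual)
qed

end

end

context dsys
begin

context
  fixes i :: nat
  assumes i: "i \<in> {1..d}"
begin

abbreviation "Ii \<equiv> I i (i+1)"
abbreviation "Jc \<equiv> A_J R d I i"
abbreviation "SS \<equiv> AA Quot A_J R d I i"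

lemma i1: "i \<in> {1..d+1}" "i+1 \<in> {1..d+1}" using i by auto

lemma Ii_ideal: "ideal Ii R" using idl[OF i1] .

definition EE :: "'a \<Rightarrow> nat \<Rightarrow> nat \<Rightarrow> 'a set" where "EE r = mk (mu i i r)"

lemma vmE: "r \<in> carrier R \<Longrightarrow> vm (mu i i r)"
  using vm_mu[of r i i] full[OF i1(1) i1(1)] i1 by auto

lemma EE_c: "r \<in> carrier R \<Longrightarrow> EE r \<in> carrier AA"
  unfolding EE_def using vmE mk_in by blast

lemma EE_mult: "r \<in> carrier R \<Longrightarrow> s \<in> carrier R \<Longrightarrow> EE r \<otimes>\<^bsub>AA\<^esub> EE s = EE (r \<otimes> s)"
  unfolding EE_def using AA_mult[OF vmE vmE] mm_mu_mu[of r s i i i] i by simp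

lemma EE_add: assumes "r \<in> carrier R" "s \<in> carrier R" shows "EE r \<oplus>\<^bsub>AA\<^esub> EE s = EE (r \<oplus> s)"
proof -
  have "madd (mu i i r) (mu i i s) = mu i i (r \<oplus> s)"
    unfolding madd_def mu_def using assms by (intro ext) auto
  then show ?thesis unfolding EE_def using AA_add[OF vmE[OF assms(1)] vmE[OF assms(2)]] by simp
qed

lemma EE_minus: assumes "r \<in> carrier R" "s \<in> carrier R" shows "EE r \<ominus>\<^bsub>AA\<^esub> EE s = EE (r \<ominus> s)"
proof -
  have "madd (mu i i r) (mneg (mu i i s)) = mu i i (r \<ominus> s)"
    unfolding madd_def mneg_def mu_def using assms by (intro ext) (auto simp: a_minus_def)
  then show ?thesis unfolding EE_def using AA_minus[OF vmE[OF assms(1)] vmE[OF assms(2)]] by simp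
qed

lemma EE_in_J: assumes "t \<in> carrier R" shows "EE t \<in> Jc \<longleftrightarrow> t \<in> Ii"
proof -
  have eqJ: "Jc = Jset i" by (rule AJ_eq) (use i in auto)
  show ?thesis
  proof
    assume "EE t \<in> Jc"
    then have "mk (mu i i t) \<in> Jset i" using eqJ EE_def by simp
    then have "cond i (mu i i t)" using Jset_rep[of i] vmE[OF assms] i by auto
    then have "mu i i t i i \<in> I i (i+1)" unfolding cond_def using i by auto
    then show "t \<in> Ii" by (simp add: mu_def)
  next
    assume t: "t \<in> Ii"
    have "cond i (mu i i t)" unfolding cond_def mu_def using t Izero i by auto
    then show "EE t \<in> Jc" unfolding eqJ EE_def Jset_def using vmE[OF assms] by blast
  qed
qed

lemma GE_eq: assumes "r \<in> carrier R" "s \<in> carrier R"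
  shows "(Jc +>\<^bsub>AA\<^esub> EE r = Jc +>\<^bsub>AA\<^esub> EE s) \<longleftrightarrow> r \<ominus> s \<in> Ii"
  using A.coset_eq_iff[OF AJ_ideal EE_c[OF assms(1)] EE_c[OF assms(2)]] EE_minus[OF assms] EE_in_J assms
  by simp

definition hh :: "'a set \<Rightarrow> (nat \<Rightarrow> nat \<Rightarrow> 'a set) set" where
  "hh C = Jc +>\<^bsub>AA\<^esub> EE (SOME r. r \<in> C)"

lemma hh_val: assumes r: "r \<in> carrier R" shows "hh (Ii +> r) = Jc +>\<^bsub>AA\<^esub> EE r"
proof -
  have "r \<in> Ii +> r" using r Ii_ideal by (simp add: rcos_mem_iff a_minus_def r_neg additive_subgroup.zero_closed ideal.axioms(1))
  then have ex: "\<exists>r'. r' \<in> Ii +> r" by blast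
  define r' where "r' = (SOME r'. r' \<in> Ii +> r)"
  have r'm: "r' \<in> Ii +> r" unfolding r'_def using someI_ex[OF ex] .
  have r'c: "r' \<in> carrier R"
    using r'm r abelian_subgroup.a_elemrcos_carrier[OF abelian_subgroupI3[OF ideal.axioms(1)[OF Ii_ideal] is_abelian_group]]
    by blast
  have "r' \<ominus> r \<in> Ii" using r'm rcos_mem_iff[OF Ii_ideal r'c r] by blast
  then have "Jc +>\<^bsub>AA\<^esub> EE r' = Jc +>\<^bsub>AA\<^esub> EE r" using GE_eq[OF r'c r] by blast
  then show ?thesis unfolding hh_def r'_def .
qed

lemma e_eq: "Jc +>\<^bsub>AA\<^esub> A_e R d I i = Jc +>\<^bsub>AA\<^esub> EE \<one>"
  unfolding EE_def using Ae_mk[OF i] by simp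

lemma SS_mult: "x \<in> carrier AA \<Longrightarrow> y \<in> carrier AA \<Longrightarrow>
   (Jc +>\<^bsub>AA\<^esub> x) \<otimes>\<^bsub>SS\<^esub> (Jc +>\<^bsub>AA\<^esub> y) = Jc +>\<^bsub>AA\<^esub> (x \<otimes>\<^bsub>AA\<^esub> y)"
  by (rule A.SQ_mult[OF AJ_ideal])

lemma SS_add: "x \<in> carrier AA \<Longrightarrow> y \<in> carrier AA \<Longrightarrow>
   (Jc +>\<^bsub>AA\<^esub> x) \<oplus>\<^bsub>SS\<^esub> (Jc +>\<^bsub>AA\<^esub> y) = Jc +>\<^bsub>AA\<^esub> (x \<oplus>\<^bsub>AA\<^esub> y)"
  by (rule A.SQ_add[OF AJ_ideal])

lemma corner_simps:
  "carrier (corner_ring SS e) = {e \<otimes>\<^bsub>SS\<^esub> x \<otimes>\<^bsub>SS\<^esub> e | x. x \<in> carrier SS}"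
  "x \<otimes>\<^bsub>corner_ring SS e\<^esub> y = x \<otimes>\<^bsub>SS\<^esub> y"
  "x \<oplus>\<^bsub>corner_ring SS e\<^esub> y = x \<oplus>\<^bsub>SS\<^esub> y"
  "\<one>\<^bsub>corner_ring SS e\<^esub> = e"
  unfolding corner_ring_def by simp_all

lemma corner_elem: assumes x: "x \<in> carrier AA"
  shows "EE \<one> \<otimes>\<^bsub>AA\<^esub> x \<otimes>\<^bsub>AA\<^esub> EE \<one> = EE (rp x i i)"
proof -
  have U: "vm (rp x)" "x = mk (rp x)" using rp[OF x] by blast+
  define U where "U = rp x"
  have U': "vm U" "x = mk U" using U unfolding U_def by simp_all
  have "mm (mm (mu i i \<one>) U) (mu i i \<one>) = mu i i (U i i)"
  proof (intro ext)
    fix a b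
    have s1: "mm (mu i i \<one>) U a' b' = (if a' = i then U i b' else \<zero>)" for a' b'
      using mm_mu_l[OF vm_cm[OF U'(1)] one_closed] i vmD[OF U'(1)] by simp
    have cm1: "cm (mm (mu i i \<one>) U)" using cm_mm[OF cm_mu[OF one_closed] vm_cm[OF U'(1)]] .
    have "mm (mm (mu i i \<one>) U) (mu i i \<one>) a b = (if b = i then mm (mu i i \<one>) U a i \<otimes> \<one> else \<zero>)"
      using mm_mu_r[OF cm1 one_closed] i by simp
    also have "\<dots> = mu i i (U i i) a b"
      using vmD[OF U'(1)] by (cases "a = i"; cases "b = i") (simp_all add: s1 mu_def[of i i "U i i"])
    finally show "mm (mm (mu i i \<one>) U) (mu i i \<one>) a b = mu i i (U i i) a b" .
  qed
  then show ?thesis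
    unfolding EE_def U_def[symmetric] using U' AA_mult vmE vm_mm by simp
qed

lemma iso: "hh \<in> ring_iso (R Quot Ii) (corner_ring SS (Jc +>\<^bsub>AA\<^esub> A_e R d I i))"
proof (rule ring_iso_memI)
  let ?e = "Jc +>\<^bsub>AA\<^esub> A_e R d I i"
  have ec: "EE \<one> \<in> carrier AA" using EE_c by simp
  have sand: "?e \<otimes>\<^bsub>SS\<^esub> (Jc +>\<^bsub>AA\<^esub> EE r) \<otimes>\<^bsub>SS\<^esub> ?e = Jc +>\<^bsub>AA\<^esub> EE r" if r: "r \<in> carrier R" for r
    unfolding e_eq using SS_mult EE_c EE_mult r A.m_closed by simp
  fix C assume C: "C \<in> carrier (R Quot Ii)"
  obtain r where r: "r \<in> carrier R" "C = Ii +> r" using SQ_carrier[OF Ii_ideal] C by blast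
  have "Jc +>\<^bsub>AA\<^esub> EE r \<in> carrier SS" using A.SQ_carrier[OF AJ_ideal] EE_c r by blast
  then show "hh C \<in> carrier (corner_ring SS ?e)"
    unfolding corner_simps hh_val[OF r(1)] r(2) using sand[OF r(1)] by (metis (mono_tags, lifting) mem_Collect_eq)
next
  fix C D assume C: "C \<in> carrier (R Quot Ii)" and D: "D \<in> carrier (R Quot Ii)"
  obtain r where r: "r \<in> carrier R" "C = Ii +> r" using SQ_carrier[OF Ii_ideal] C by blast
  obtain s where s: "s \<in> carrier R" "D = Ii +> s" using SQ_carrier[OF Ii_ideal] D by blast
  show "hh (C \<otimes>\<^bsub>R Quot Ii\<^esub> D) = hh C \<otimes>\<^bsub>corner_ring SS (Jc +>\<^bsub>AA\<^esub> A_e R d I i)\<^esub> hh D"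
    unfolding corner_simps r(2) s(2) using SQ_mult[OF Ii_ideal r(1) s(1)] hh_val r s SS_mult EE_c EE_mult
    by simp
  show "hh (C \<oplus>\<^bsub>R Quot Ii\<^esub> D) = hh C \<oplus>\<^bsub>corner_ring SS (Jc +>\<^bsub>AA\<^esub> A_e R d I i)\<^esub> hh D"
    unfolding corner_simps r(2) s(2) using SQ_add[OF Ii_ideal r(1) s(1)] hh_val r s SS_add EE_c EE_add
    by simp
next
  show "hh \<one>\<^bsub>R Quot Ii\<^esub> = \<one>\<^bsub>corner_ring SS (Jc +>\<^bsub>AA\<^esub> A_e R d I i)\<^esub>"
    unfolding corner_simps SQ_one using hh_val e_eq by simp
next
  let ?e = "Jc +>\<^bsub>AA\<^esub> A_e R d I i"
  show "bij_betw hh (carrier (R Quot Ii)) (carrier (corner_ring SS ?e))"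
  proof (rule bij_betw_imageI)
    show "inj_on hh (carrier (R Quot Ii))"
    proof (rule inj_onI)
      fix C D assume C: "C \<in> carrier (R Quot Ii)" and D: "D \<in> carrier (R Quot Ii)" and eq: "hh C = hh D"
      obtain r where r: "r \<in> carrier R" "C = Ii +> r" using SQ_carrier[OF Ii_ideal] C by blast
      obtain s where s: "s \<in> carrier R" "D = Ii +> s" using SQ_carrier[OF Ii_ideal] D by blast
      have "r \<ominus> s \<in> Ii" using eq hh_val r s GE_eq by simp
      then show "C = D" using coset_eq_iff[OF Ii_ideal r(1) s(1)] r s by simp
    qed
  next
    show "hh ` carrier (R Quot Ii) = carrier (corner_ring SS ?e)"
    proof
      show "hh ` carrier (R Quot Ii) \<subseteq> carrier (corner_ring SS ?e)"
      proof
        fix z assume "z \<in> hh ` carrier (R Quot Ii)"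
        then obtain C where C: "C \<in> carrier (R Quot Ii)" "z = hh C" by blast
        obtain r where r: "r \<in> carrier R" "C = Ii +> r" using SQ_carrier[OF Ii_ideal] C by blast
        have zz: "z = Jc +>\<^bsub>AA\<^esub> EE r" using C r hh_val by simp
        have "Jc +>\<^bsub>AA\<^esub> EE r \<in> carrier SS" using A.SQ_carrier[OF AJ_ideal] EE_c r by blast
        moreover have "?e \<otimes>\<^bsub>SS\<^esub> (Jc +>\<^bsub>AA\<^esub> EE r) \<otimes>\<^bsub>SS\<^esub> ?e = Jc +>\<^bsub>AA\<^esub> EE r"
          unfolding e_eq using SS_mult EE_c EE_mult r A.m_closed by simp
        ultimately show "z \<in> carrier (corner_ring SS ?e)"
          unfolding corner_simps zz by (metis (mono_tags, lifting) mem_Collect_eq)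
      qed
    next
      show "carrier (corner_ring SS ?e) \<subseteq> hh ` carrier (R Quot Ii)"
      proof
        fix z assume "z \<in> carrier (corner_ring SS ?e)"
        then obtain Xq where Xq: "Xq \<in> carrier SS" "z = ?e \<otimes>\<^bsub>SS\<^esub> Xq \<otimes>\<^bsub>SS\<^esub> ?e"
          unfolding corner_simps by blast
        obtain x where x: "x \<in> carrier AA" "Xq = Jc +>\<^bsub>AA\<^esub> x" using A.SQ_carrier[OF AJ_ideal] Xq by blast
        have rc: "rp x i i \<in> carrier R" using rp[OF x(1)] vmD by blast
        have "z = Jc +>\<^bsub>AA\<^esub> (EE \<one> \<otimes>\<^bsub>AA\<^esub> x \<otimes>\<^bsub>AA\<^esub> EE \<one>)"
          unfolding Xq(2) x(2) e_eq using SS_mult EE_c x(1) A.m_closed by simp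
        also have "\<dots> = hh (Ii +> rp x i i)" using corner_elem[OF x(1)] hh_val[OF rc] by simp
        finally have "z = hh (Ii +> rp x i i)" .
        moreover have "Ii +> rp x i i \<in> carrier (R Quot Ii)" using SQ_carrier[OF Ii_ideal] rc by blast
        ultimately show "z \<in> hh ` carrier (R Quot Ii)" by blast
      qed
    qed
  qed
qed

lemma corner_iso: "corner_ring SS (Jc +>\<^bsub>AA\<^esub> A_e R d I i) \<simeq> R Quot Ii"
  using ring_iso_sym[OF ideal.quotient_is_ring[OF Ii_ideal]] iso unfolding is_ring_iso_def by blast

end
end

theorem theorem3p6:
  fixes R :: "'a ring" and d :: nat and I :: "nat \<Rightarrow> nat \<Rightarrow> 'a set"
  assumes "ring R"
    and "d_system R d I"
  shows "A_J R d I 0 = carrier (A_ring R d I)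
       \<and> A_J R d I d = {\<zero>\<^bsub>A_ring R d I\<^esub>}
       \<and> (\<forall>i \<in> {1..d}.
            A_J R d I i \<subseteq> A_J R d I (i - 1)
          \<and> A_J R d I i \<cdot>\<^bsub>A_ring R d I\<^esub> A_J R d I i = A_J R d I i
          \<and> projective_lmod TYPE('b) (A_ring R d I Quot A_J R d I i)
              (quot_submodule (A_ring R d I) (A_J R d I (i - 1)) (A_J R d I i))
          \<and> corner_ring (A_ring R d I Quot A_J R d I i) (A_J R d I i +>\<^bsub>A_ring R d I\<^esub> A_e R d I i)
              \<simeq> R Quot I i (i + 1))"
proof -
  interpret D: dsys R d I by (intro dsys.intro dsys_axioms.intro assms)
  show ?thesis
    using D.J0 D.Jd D.Jsub D.Jidem D.projective D.corner_iso by blast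
qed

end
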